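(* The mapping which associates its code to a covered map is a bijection between covered maps with $n$ edges and code-shuffles of length $2n$ (on alphabets $A_k\uplus B_l$ with $k+l=n$). Moreover, if $w$ is the code of the covered map $(M,S)$, then $w_{|A}$ is the code of the unicellular map $M_{|S}$ (on the alphabet $A_{|S|/2}$) and $w_{|B}$ is the code of the dual unicellular map $M^*_{|\bar S}$ (on the alphabet $B_{|\bar S|/2}$).
   Context: Permutations compose right to left. A map is $M=(H,\sigma,\alpha)$, $H$ finite, $\alpha$ fixed-point-free involution, $\sigma$ a permutation, $\langle\sigma,\alpha\rangle$ transitive, with root $r\in H$, considered up to root-preserving relabelling; its face-permutation is $\phi=\sigma\alpha$; unicellular means $\phi$ is cyclic (the empty map counts as unicellular). For $S\subseteq H$, $\pi_{|S}$ is obtained from the cycles of $\pi$ by erasing elements not in $S$. A covered map is $(M,S)$ with $S$ stable by $\alpha$ such that $M_{|S}=(S,\sigma_{|S},\alpha_{|S})$ is a connecting unicellular map ($\sigma_{|S},\alpha_{|S}$ transitive on $S$, $S$ meets every cycle of $\sigma$ — $S=\emptyset$ allowed if $\sigma$ has one cycle — and $\sigma_{|S}\alpha_{|S}$ cyclic). Let $\bar S=H\setminus S$ and $M^*=(H,\phi,\alpha)$; $M^*_{|\bar S}=(\bar S,\phi_{|\bar S},\alpha_{|\bar S})$. The root of $M_{|S}$ is $\sigma^i(r)$ with $i\ge0$ least such that $\sigma^i(r)\in S$; the root of $M^*_{|\bar S}$ is $\phi^j(r)$ with $j\ge0$ least such that $\phi^j(r)\in\bar S$. The motion function is $\theta(h)=\sigma\alpha(h)$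 for $h\in S$ and $\theta(h)=\sigma(h)$ otherwise; it is cyclic when $(M,S)$ is covered. Let $A_n=\{a_1,\bar a_1,\dots,a_n,\bar a_n\}$. A unicellular code on $A_n$ is a word in which each letter of $A_n$ occurs exactly once and, for $1\le i<j\le n$, $a_i$ occurs before $\bar a_i$ and before $a_j$. The code of a unicellular map with $n$ edges is the unique word $w=w_1\cdots w_{2n}$ that is a unicellular code such that after relabelling the half-edges by $A_n$ one has $\alpha(a_i)=\bar a_i$, $\phi=(w_1,\dots,w_{2n})$ and $w_1$ is the root. With $B_l=\{b_1,\bar b_1,\dots,b_l,\bar b_l\}$, a word $w$ on $A_k\uplus B_l$ is a code-shuffle if its subwords $w_{|A}$ and $w_{|B}$ consisting of letters of $A_k$, resp. $B_l$, are unicellular codes. The code of a covered map $(M,S)$ with $k=|S|/2$, $l=|\bar S|/2$ is the unique code-shuffle $w=w_1\cdots w_{2n}$ such that after relabelling the half-edges by $A_k\uplus B_l$ one has $S=A_k$, $\bar S=B_l$, $\alpha(a_i)=\bar a_i$, $\alpha(b_i)=\bar b_i$, $\theta=(w_1,\dots,w_{2n})$ and $w_1$ is the root of $M$. *)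

theory Defs
  imports "HOL-Combinatorics.Permutations"
begin

text \<open>Permutations are functions on the whole type that are bijections of the
half-edge set H and the identity outside (HOL-Combinatorics permutes).
Composition is right to left: the face permutation is phi h = sigma (alpha h).\<close>

definition gen_rel :: "('a \<Rightarrow> 'a) \<Rightarrow> ('a \<Rightarrow> 'a) \<Rightarrow> 'a set \<Rightarrow> ('a \<times> 'a) set" where
  "gen_rel s a H = {(x, s x) | x. x \<in> H} \<union> {(x, a x) | x. x \<in> H}"

text \<open>The group generated by s and a acts transitively on H
(for finite permutations, forward reachability equals the group orbit).\<close>
definition transitive_on :: "('a \<Rightarrow> 'a) \<Rightarrow> ('a \<Rightarrow> 'a) \<Rightarrow> 'a set \<Rightarrow> bool" where
  "transitive_on s a H \<longleftrightarrow> (\<forall>x\<in>H. \<forall>y\<in>H. (x, y) \<in> (gen_rel s a H)\<^sup>*)"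

text \<open>A permutation is cyclic on X (one cycle); the empty set counts as cyclic.\<close>
definition is_cyclic :: "('a \<Rightarrow> 'a) \<Rightarrow> 'a set \<Rightarrow> bool" where
  "is_cyclic p X \<longleftrightarrow> (\<forall>x\<in>X. \<forall>y\<in>X. \<exists>k. (p ^^ k) x = y)"

definition is_map :: "'a set \<Rightarrow> ('a \<Rightarrow> 'a) \<Rightarrow> ('a \<Rightarrow> 'a) \<Rightarrow> 'a \<Rightarrow> bool" where
  "is_map H s a r \<longleftrightarrow> finite H \<and> s permutes H \<and> a permutes H
     \<and> (\<forall>h\<in>H. a h \<noteq> h \<and> a (a h) = h)
     \<and> transitive_on s a H \<and> (H \<noteq> {} \<longrightarrow> r \<in> H)"

text \<open>Restriction pi_{|S}: erase elements not in S from the cycles of pi.\<close>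
definition restr :: "('a \<Rightarrow> 'a) \<Rightarrow> 'a set \<Rightarrow> 'a \<Rightarrow> 'a" where
  "restr p S h = (if h \<in> S then (p ^^ (LEAST k. k > 0 \<and> (p ^^ k) h \<in> S)) h else h)"

definition first_in :: "('a \<Rightarrow> 'a) \<Rightarrow> 'a set \<Rightarrow> 'a \<Rightarrow> 'a" where
  "first_in p S r = (p ^^ (LEAST i. (p ^^ i) r \<in> S)) r"

definition face_perm :: "('a \<Rightarrow> 'a) \<Rightarrow> ('a \<Rightarrow> 'a) \<Rightarrow> 'a \<Rightarrow> 'a" where
  "face_perm s a h = s (a h)"

definition motion :: "('a \<Rightarrow> 'a) \<Rightarrow> ('a \<Rightarrow> 'a) \<Rightarrow> 'a set \<Rightarrow> 'a \<Rightarrow> 'a" where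
  "motion s a S h = (if h \<in> S then s (a h) else s h)"

definition covered_map :: "'a set \<Rightarrow> ('a \<Rightarrow> 'a) \<Rightarrow> ('a \<Rightarrow> 'a) \<Rightarrow> 'a \<Rightarrow> 'a set \<Rightarrow> bool" where
  "covered_map H s a r S \<longleftrightarrow> is_map H s a r \<and> S \<subseteq> H \<and> a ` S \<subseteq> S
     \<and> transitive_on (restr s S) (restr a S) S
     \<and> ((\<forall>h\<in>H. \<exists>k. (s ^^ k) h \<in> S) \<or> (S = {} \<and> is_cyclic s H))
     \<and> is_cyclic (face_perm (restr s S) (restr a S)) S"

definition iso_covered ::
  "'a set \<Rightarrow> ('a \<Rightarrow> 'a) \<Rightarrow> ('a \<Rightarrow> 'a) \<Rightarrow> 'a \<Rightarrow> 'a set \<Rightarrow>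
   'b set \<Rightarrow> ('b \<Rightarrow> 'b) \<Rightarrow> ('b \<Rightarrow> 'b) \<Rightarrow> 'b \<Rightarrow> 'b set \<Rightarrow> bool" where
  "iso_covered H s a r S H' s' a' r' S' \<longleftrightarrow>
     (\<exists>f. bij_betw f H H' \<and> (\<forall>h\<in>H. f (s h) = s' (f h) \<and> f (a h) = a' (f h))
        \<and> f ` S = S' \<and> (H \<noteq> {} \<longrightarrow> f r = r'))"

text \<open>LA i = a_i, LAb i = bar a_i, LB i = b_i, LBb i = bar b_i (indices from 1).\<close>
datatype letter = LA nat | LAb nat | LB nat | LBb nat

fun bar :: "letter \<Rightarrow> letter" where
  "bar (LA i) = LAb i" | "bar (LAb i) = LA i" | "bar (LB i) = LBb i" | "bar (LBb i) = LB i"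

fun isA :: "letter \<Rightarrow> bool" where
  "isA (LA _) = True" | "isA (LAb _) = True" | "isA _ = False"

fun isB :: "letter \<Rightarrow> bool" where
  "isB (LB _) = True" | "isB (LBb _) = True" | "isB _ = False"

definition before :: "letter list \<Rightarrow> letter \<Rightarrow> letter \<Rightarrow> bool" where
  "before w x y \<longleftrightarrow> (\<exists>i j. i < j \<and> j < length w \<and> w ! i = x \<and> w ! j = y)"

definition ucode :: "(nat \<Rightarrow> letter) \<Rightarrow> (nat \<Rightarrow> letter) \<Rightarrow> nat \<Rightarrow> letter list \<Rightarrow> bool" where
  "ucode c cb n w \<longleftrightarrow> distinct w \<and> set w = c ` {1..n} \<union> cb ` {1..n}
     \<and> (\<forall>i\<in>{1..n}. before w (c i) (cb i))
     \<and> (\<forall>i j. 1 \<le> i \<and> i < j \<and> j \<le> n \<longrightarrow> before w (c i) (c j))"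

definition code_shuffle :: "nat \<Rightarrow> nat \<Rightarrow> letter list \<Rightarrow> bool" where
  "code_shuffle k l w \<longleftrightarrow> ucode LA LAb k (filter isA w) \<and> ucode LB LBb l (filter isB w)"

definition umap_code :: "(nat \<Rightarrow> letter) \<Rightarrow> (nat \<Rightarrow> letter) \<Rightarrow>
    'a set \<Rightarrow> ('a \<Rightarrow> 'a) \<Rightarrow> ('a \<Rightarrow> 'a) \<Rightarrow> 'a \<Rightarrow> letter list \<Rightarrow> bool" where
  "umap_code c cb H s a r w \<longleftrightarrow> ucode c cb (card H div 2) w \<and>
     (\<exists>f. bij_betw f H (set w) \<and> (\<forall>h\<in>H. f (a h) = bar (f h))
        \<and> (\<forall>h\<in>H. \<forall>i<length w. f h = w ! i \<longrightarrow> f (face_perm s a h) = w ! (Suc i mod length w))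
        \<and> (H \<noteq> {} \<longrightarrow> f r = w ! 0))"

definition covered_code :: "'a set \<Rightarrow> ('a \<Rightarrow> 'a) \<Rightarrow> ('a \<Rightarrow> 'a) \<Rightarrow> 'a \<Rightarrow> 'a set \<Rightarrow> letter list \<Rightarrow> bool" where
  "covered_code H s a r S w \<longleftrightarrow> code_shuffle (card S div 2) (card (H - S) div 2) w \<and>
     (\<exists>f. bij_betw f H (set w) \<and> (\<forall>h\<in>H. isA (f h) \<longleftrightarrow> h \<in> S)
        \<and> (\<forall>h\<in>H. f (a h) = bar (f h))
        \<and> (\<forall>h\<in>H. \<forall>i<length w. f h = w ! i \<longrightarrow> f (motion s a S h) = w ! (Suc i mod length w))
        \<and> (H \<noteq> {} \<longrightarrow> f r = w ! 0))"

end

theory Submission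
  imports Defs "HOL-Combinatorics.Cycles"
begin

definition pos :: "'a list \<Rightarrow> 'a \<Rightarrow> nat" where
  "pos xs x = (LEAST i. i < length xs \<and> xs ! i = x)"

lemma pos_props:
  assumes "x \<in> set xs"
  shows "pos xs x < length xs" "xs ! pos xs x = x"
proof -
  obtain i where i: "i < length xs" "xs ! i = x" using assms by (metis in_set_conv_nth)
  have "pos xs x < length xs \<and> xs ! pos xs x = x"
    unfolding pos_def by (rule LeastI[of _ i]) (use i in auto)
  then show "pos xs x < length xs" "xs ! pos xs x = x" by auto
qed

lemma pos_nth:
  assumes "distinct xs" "i < length xs"
  shows "pos xs (xs ! i) = i"
  using pos_props[of "xs ! i" xs] assms nth_eq_iff_index_eq by (metis nth_mem)

lemma pos_inj:
  assumes "x \<in> set xs" "y \<in> set xs" "pos xs x = pos xs y"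
  shows "x = y"
  using pos_props assms by metis

definition rk :: "'a list \<Rightarrow> ('a \<Rightarrow> 'a) \<Rightarrow> 'a \<Rightarrow> nat" where
  "rk xs \<alpha> x = card {y \<in> set xs. pos xs y \<le> pos xs x \<and> pos xs y < pos xs (\<alpha> y)}"

definition lab :: "(nat \<Rightarrow> letter) \<Rightarrow> (nat \<Rightarrow> letter) \<Rightarrow> 'a list \<Rightarrow> ('a \<Rightarrow> 'a) \<Rightarrow> 'a \<Rightarrow> letter" where
  "lab c cb xs \<alpha> x = (if pos xs x < pos xs (\<alpha> x) then c (rk xs \<alpha> x) else cb (rk xs \<alpha> (\<alpha> x)))"

locale alph =
  fixes c cb :: "nat \<Rightarrow> letter"
  assumes c_inj: "inj c" and cb_inj: "inj cb" and c_cb: "c i \<noteq> cb j"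
    and bar_c: "bar (c i) = cb i" and bar_cb: "bar (cb i) = c i"

lemma alph_A: "alph LA LAb" by (auto simp: alph_def inj_def)
lemma alph_B: "alph LB LBb" by (auto simp: alph_def inj_def)

definition invol :: "('a \<Rightarrow> 'a) \<Rightarrow> 'a set \<Rightarrow> bool" where
  "invol \<alpha> X \<longleftrightarrow> (\<forall>x\<in>X. \<alpha> x \<in> X \<and> \<alpha> x \<noteq> x \<and> \<alpha> (\<alpha> x) = x)"

context alph begin

lemma ucode_length:
  assumes "ucode c cb n w" shows "length w = 2 * n"
proof -
  have d: "distinct w" and s: "set w = c ` {1..n} \<union> cb ` {1..n}" using assms by (auto simp: ucode_def)
  have "card (set w) = card (c ` {1..n}) + card (cb ` {1..n})"
    unfolding s by (rule card_Un_disjoint) (auto simp: c_cb)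
  also have "\<dots> = 2 * n" using card_image[OF inj_on_subset[OF c_inj]] card_image[OF inj_on_subset[OF cb_inj]]
    by simp
  finally show ?thesis using distinct_card[OF d] by simp
qed

end

locale labctx = alph +
  fixes xs :: "'a list" and \<alpha> :: "'a \<Rightarrow> 'a"
  assumes dist: "distinct xs" and inv: "invol \<alpha> (set xs)"
begin

abbreviation "Op \<equiv> {y \<in> set xs. pos xs y < pos xs (\<alpha> y)}"

lemma al_in: "x \<in> set xs \<Longrightarrow> \<alpha> x \<in> set xs" and al_ne: "x \<in> set xs \<Longrightarrow> \<alpha> x \<noteq> x"
  and al_al: "x \<in> set xs \<Longrightarrow> \<alpha> (\<alpha> x) = x"
  using inv by (auto simp: invol_def)

lemma pos_ne: "x \<in> set xs \<Longrightarrow> pos xs x \<noteq> pos xs (\<alpha> x)"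
  using pos_inj al_in al_ne by metis

lemma notO: "x \<in> set xs \<Longrightarrow> x \<notin> Op \<Longrightarrow> \<alpha> x \<in> Op"
  using pos_ne[of x] al_in[of x] al_al[of x] by auto

lemma O_al: "x \<in> Op \<Longrightarrow> \<alpha> x \<notin> Op"
  using al_in[of x] al_al[of x] by auto

lemma card_O: "2 * card Op = length xs"
proof -
  have split: "set xs = Op \<union> \<alpha> ` Op" using notO al_al al_in by force
  have disj: "Op \<inter> \<alpha> ` Op = {}" using O_al by auto
  have "inj_on \<alpha> Op" by (rule inj_onI) (metis (no_types, lifting) mem_Collect_eq al_al)
  then have "card (\<alpha> ` Op) = card Op" by (rule card_image)
  then have "card (set xs) = 2 * card Op" using card_Un_disjoint[of Op "\<alpha> ` Op"] split disj by simp
  then show ?thesis using distinct_card[OF dist] by simp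
qed

lemma rk_eq: "rk xs \<alpha> x = card {y \<in> Op. pos xs y \<le> pos xs x}"
  unfolding rk_def by (rule arg_cong[where f=card]) auto

lemma rk_mono: assumes "x \<in> Op" "y \<in> Op" "pos xs x < pos xs y" shows "rk xs \<alpha> x < rk xs \<alpha> y"
  unfolding rk_eq
proof (rule psubset_card_mono)
  show "finite {z \<in> Op. pos xs z \<le> pos xs y}" by simp
  have "y \<in> {z \<in> Op. pos xs z \<le> pos xs y}" "y \<notin> {z \<in> Op. pos xs z \<le> pos xs x}"
    using assms by auto
  moreover have "{z \<in> Op. pos xs z \<le> pos xs x} \<subseteq> {z \<in> Op. pos xs z \<le> pos xs y}"
    using assms by auto
  ultimately show "{z \<in> Op. pos xs z \<le> pos xs x} \<subset> {z \<in> Op. pos xs z \<le> pos xs y}"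
    by blast
qed

lemma rk_range: assumes "x \<in> Op" shows "rk xs \<alpha> x \<in> {1..card Op}"
proof -
  have "rk xs \<alpha> x \<le> card Op" unfolding rk_eq by (rule card_mono) auto
  moreover have "rk xs \<alpha> x \<ge> 1"
  proof -
    have "x \<in> {y \<in> Op. pos xs y \<le> pos xs x}" using assms by auto
    moreover have "finite {y \<in> Op. pos xs y \<le> pos xs x}" by simp
    ultimately have "card {y \<in> Op. pos xs y \<le> pos xs x} > 0" using card_gt_0_iff by blast
    then show ?thesis unfolding rk_eq by simp
  qed
  ultimately show ?thesis by simp
qed

lemma rk_inj: "inj_on (rk xs \<alpha>) Op"
proof (rule inj_onI)
  fix x y assume "x \<in> Op" "y \<in> Op" "rk xs \<alpha> x = rk xs \<alpha> y"
  then show "x = y"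
  proof -
    assume a: "x \<in> Op" "y \<in> Op" "rk xs \<alpha> x = rk xs \<alpha> y"
    have "\<not> pos xs x < pos xs y" using rk_mono[of x y] a by auto
    moreover have "\<not> pos xs y < pos xs x" using rk_mono[of y x] a by auto
    ultimately have "pos xs x = pos xs y" by simp
    then show "x = y" using pos_inj[of x xs y] a by blast
  qed
qed

lemma rk_img: "rk xs \<alpha> ` Op = {1..card Op}"
proof (rule card_subset_eq)
  show "finite {1..card Op}" by simp
  show "rk xs \<alpha> ` Op \<subseteq> {1..card Op}" using rk_range by auto
  show "card (rk xs \<alpha> ` Op) = card {1..card Op}" using card_image[OF rk_inj] by simp
qed

abbreviation "lb \<equiv> lab c cb xs \<alpha>"

lemma lab_O: "x \<in> Op \<Longrightarrow> lb x = c (rk xs \<alpha> x)" by (simp add: lab_def)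
lemma lab_nO: "x \<in> set xs \<Longrightarrow> x \<notin> Op \<Longrightarrow> lb x = cb (rk xs \<alpha> (\<alpha> x))" by (simp add: lab_def)

lemma lab_bar: assumes "x \<in> set xs" shows "lb (\<alpha> x) = bar (lb x)"
proof (cases "x \<in> Op")
  case True
  then show ?thesis using lab_nO[of "\<alpha> x"] O_al[of x] al_in al_al assms lab_O bar_c by simp
next
  case False
  then show ?thesis using lab_nO[of x] notO[of x] lab_O[of "\<alpha> x"] assms bar_cb by simp
qed

lemma lab_cj: assumes "x \<in> Op" shows "lb x = c (rk xs \<alpha> x)" "lb (\<alpha> x) = cb (rk xs \<alpha> x)"
proof -
  show "lb x = c (rk xs \<alpha> x)" using assms by (rule lab_O)
  have "\<alpha> x \<in> set xs" "\<alpha> x \<notin> Op" using assms al_in O_al by auto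
  then have "lb (\<alpha> x) = cb (rk xs \<alpha> (\<alpha> (\<alpha> x)))" by (rule lab_nO)
  then show "lb (\<alpha> x) = cb (rk xs \<alpha> x)" using assms al_al by simp
qed

lemma lab_inj: "inj_on lb (set xs)"
proof (rule inj_onI)
  fix x y assume x: "x \<in> set xs" and y: "y \<in> set xs" and e: "lb x = lb y"
  show "x = y"
  proof (cases "x \<in> Op"; cases "y \<in> Op")
    assume a: "x \<in> Op" "y \<in> Op"
    then have "c (rk xs \<alpha> x) = c (rk xs \<alpha> y)" using e lab_O[of x] lab_O[of y] by simp
    then have "rk xs \<alpha> x = rk xs \<alpha> y" using c_inj by (simp add: inj_eq)
    then show ?thesis using rk_inj a by (simp add: inj_on_def)
  next
    assume "x \<in> Op" "y \<notin> Op" then show ?thesis using e lab_O[of x] lab_nO[of y] y c_cb by simp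
  next
    assume "x \<notin> Op" "y \<in> Op"
    then have "lb x = cb (rk xs \<alpha> (\<alpha> x))" "lb y = c (rk xs \<alpha> y)" using lab_O[of y] lab_nO[of x] x by auto
    then show ?thesis using e c_cb by metis
  next
    assume a: "x \<notin> Op" "y \<notin> Op"
    then have "cb (rk xs \<alpha> (\<alpha> x)) = cb (rk xs \<alpha> (\<alpha> y))" using e lab_nO[of x] lab_nO[of y] x y by simp
    then have "rk xs \<alpha> (\<alpha> x) = rk xs \<alpha> (\<alpha> y)" using cb_inj by (simp add: inj_eq)
    moreover have "\<alpha> x \<in> Op" "\<alpha> y \<in> Op" using notO a x y by auto
    ultimately have "\<alpha> x = \<alpha> y" using rk_inj by (simp add: inj_on_def)
    then show ?thesis using al_al[of x] al_al[of y] x y by metis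
  qed
qed

lemma before_map: assumes "x \<in> set xs" "y \<in> set xs" "pos xs x < pos xs y"
  shows "before (map f xs) (f x) (f y)"
  unfolding before_def using assms pos_props[of x xs] pos_props[of y xs] by (intro exI[of _ "pos xs x"] exI[of _ "pos xs y"]) auto

lemma lab_ucode: "ucode c cb (length xs div 2) (map lb xs)"
proof -
  have n: "length xs div 2 = card Op" using card_O by simp
  have setw: "set (map lb xs) = c ` {1..card Op} \<union> cb ` {1..card Op}"
  proof
    show "set (map lb xs) \<subseteq> c ` {1..card Op} \<union> cb ` {1..card Op}"
    proof
      fix z assume "z \<in> set (map lb xs)"
      then obtain x where x: "x \<in> set xs" "z = lb x" by auto
      show "z \<in> c ` {1..card Op} \<union> cb ` {1..card Op}"
      proof (cases "x \<in> Op")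
        case True
        then have "z = c (rk xs \<alpha> x)" "rk xs \<alpha> x \<in> {1..card Op}" using x lab_O[of x] rk_range[of x] by auto
        then show ?thesis by (intro UnI1) (rule image_eqI)
      next
        case False
        then have "z = cb (rk xs \<alpha> (\<alpha> x))" "rk xs \<alpha> (\<alpha> x) \<in> {1..card Op}" using x lab_nO[of x] rk_range[of "\<alpha> x"] notO[of x] by auto
        then show ?thesis by (intro UnI2) (rule image_eqI)
      qed
    qed
    show "c ` {1..card Op} \<union> cb ` {1..card Op} \<subseteq> set (map lb xs)"
    proof -
      { fix j assume "j \<in> {1..card Op}"
        then have "j \<in> rk xs \<alpha> ` Op" using rk_img by simp
        then obtain x where x: "x \<in> Op" "rk xs \<alpha> x = j" by blast
        then have "lb x = c j" "lb (\<alpha> x) = cb j" using lab_cj by auto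
        moreover have "x \<in> set xs" "\<alpha> x \<in> set xs" using x al_in by auto
        ultimately have "c j \<in> set (map lb xs)" "cb j \<in> set (map lb xs)" by (simp_all add: rev_image_eqI) }
      then show ?thesis by auto
    qed
  qed
  have b1: "before (map lb xs) (c i) (cb i)" if "i \<in> {1..card Op}" for i
  proof -
    have "i \<in> rk xs \<alpha> ` Op" using rk_img that by simp
    then obtain x where x: "x \<in> Op" "rk xs \<alpha> x = i" by blast
    then have "lb x = c i" "lb (\<alpha> x) = cb i" using lab_cj by auto
    moreover have "x \<in> set xs" "\<alpha> x \<in> set xs" "pos xs x < pos xs (\<alpha> x)" using x al_in by auto
    ultimately show ?thesis using before_map[of x "\<alpha> x" lb] by simp
  qed
  have b2: "before (map lb xs) (c i) (c j)" if ij: "1 \<le> i" "i < j" "j \<le> card Op" for i j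
  proof -
    have "i \<in> {1..card Op}" "j \<in> {1..card Op}" using ij by auto
    then have "i \<in> rk xs \<alpha> ` Op" "j \<in> rk xs \<alpha> ` Op" unfolding rk_img .
    then obtain x y where x: "x \<in> Op" "rk xs \<alpha> x = i" and y: "y \<in> Op" "rk xs \<alpha> y = j" by blast
    have "pos xs x < pos xs y"
    proof (rule ccontr)
      assume "\<not> ?thesis"
      then have "pos xs y < pos xs x \<or> pos xs y = pos xs x" by linarith
      moreover have "\<not> pos xs y < pos xs x"
      proof
        assume "pos xs y < pos xs x"
        then have "rk xs \<alpha> y < rk xs \<alpha> x" using rk_mono[of y x] x(1) y(1) by blast
        then show False using x(2) y(2) ij(2) by linarith
      qed
      moreover have "pos xs y \<noteq> pos xs x"
      proof
        assume "pos xs y = pos xs x"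
        moreover have "x \<in> set xs" "y \<in> set xs" using x(1) y(1) by auto
        ultimately have "x = y" using pos_inj[of x xs y] by metis
        then show False using x(2) y(2) ij(2) by blast
      qed
      ultimately show False by blast
    qed
    moreover have "lb x = c i" "lb y = c j" using x y lab_O by auto
    moreover have "x \<in> set xs" "y \<in> set xs" using x y by auto
    ultimately show ?thesis using before_map[of x y lb] by simp
  qed
  have "distinct (map lb xs)" using distinct_map lab_inj dist by blast
  then show ?thesis unfolding ucode_def n
    using setw b1 b2 by blast
qed

lemma c_mem: assumes "c j \<in> c ` {1..n} \<union> cb ` {1..n}" shows "j \<in> {1..n}"
  using assms c_inj c_cb by (auto simp: inj_eq)

lemma cb_mem: assumes "cb j \<in> c ` {1..n} \<union> cb ` {1..n}" shows "j \<in> {1..n}"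
  using assms cb_inj c_cb by (auto simp: inj_eq) (metis c_cb)+

lemma lab_unique:
  assumes uc: "ucode c cb n (map g xs)" and ginj: "inj_on g (set xs)"
    and gbar: "\<And>x. x \<in> set xs \<Longrightarrow> g (\<alpha> x) = bar (g x)"
    and x: "x \<in> set xs"
  shows "g x = lb x"
proof -
  let ?w = "map g xs"
  have setw: "set ?w = c ` {1..n} \<union> cb ` {1..n}" using uc by (simp add: ucode_def)
  have bc: "\<And>i. i \<in> {1..n} \<Longrightarrow> before ?w (c i) (cb i)" using uc by (simp add: ucode_def)
  have bcc: "\<And>i j. 1 \<le> i \<Longrightarrow> i < j \<Longrightarrow> j \<le> n \<Longrightarrow> before ?w (c i) (c j)" using uc by (simp add: ucode_def)
  have bef: "pos xs u < pos xs v" if u: "u \<in> set xs" and v: "v \<in> set xs" and b: "before ?w (g u) (g v)" for u v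
  proof -
    obtain i j where ij: "i < j" "j < length ?w" "?w ! i = g u" "?w ! j = g v" using b by (auto simp: before_def)
    have "g (xs ! i) = g u" "g (xs ! j) = g v" using ij by auto
    then have "xs ! i = u" "xs ! j = v" using ginj u v ij by (auto simp: inj_on_def)
    then have "pos xs u = i" "pos xs v = j" using pos_nth[OF dist] ij by auto
    then show ?thesis using ij by simp
  qed
  have gmem: "g y \<in> c ` {1..n} \<union> cb ` {1..n}" if "y \<in> set xs" for y
    using that setw by auto
  have cl1: "y \<in> Op" if y: "y \<in> set xs" and gy: "g y = c m" for y m
  proof -
    have m: "m \<in> {1..n}" using gmem[OF y] gy c_mem by metis
    have "g (\<alpha> y) = cb m" using gbar[OF y] gy bar_c by simp
    then have "before ?w (g y) (g (\<alpha> y))" using bc[OF m] gy by simp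
    then have "pos xs y < pos xs (\<alpha> y)" using bef y al_in[OF y] by blast
    then show ?thesis using y by simp
  qed
  have cl1': "\<exists>m. g y = c m" if y: "y \<in> Op" for y
  proof (rule ccontr)
    assume "\<not> ?thesis"
    then obtain m where gy: "g y = cb m" using gmem[of y] y by auto
    have "g (\<alpha> y) = c m" using gbar[of y] y gy bar_cb by simp
    then have "\<alpha> y \<in> Op" using cl1[of "\<alpha> y" m] al_in[of y] y by auto
    then show False using O_al[OF y] by simp
  qed
  have main: "rk xs \<alpha> y = j" if y: "y \<in> Op" and gy: "g y = c j" for y j
  proof -
    have yx: "y \<in> set xs" using y by simp
    have j: "j \<in> {1..n}" using gmem[OF yx] gy c_mem by metis
    have eq: "{z \<in> Op. pos xs z \<le> pos xs y} = {z \<in> set xs. g z \<in> c ` {1..j}}"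
    proof
      show "{z \<in> Op. pos xs z \<le> pos xs y} \<subseteq> {z \<in> set xs. g z \<in> c ` {1..j}}"
      proof
        fix z assume z: "z \<in> {z \<in> Op. pos xs z \<le> pos xs y}"
        then have zO: "z \<in> Op" and zx: "z \<in> set xs" and zp: "pos xs z \<le> pos xs y" by auto
        obtain m where gz: "g z = c m" using cl1'[OF zO] by blast
        have m: "m \<in> {1..n}" using gmem[OF zx] gz c_mem by metis
        have "m \<le> j"
        proof (rule ccontr)
          assume "\<not> m \<le> j"
          then have "before ?w (c j) (c m)" using bcc[of j m] j m by auto
          then have "pos xs y < pos xs z" using bef[OF yx zx] gy gz by simp
          then show False using zp by simp
        qed
        then show "z \<in> {z \<in> set xs. g z \<in> c ` {1..j}}" using zx gz m by auto
      qed
      show "{z \<in> set xs. g z \<in> c ` {1..j}} \<subseteq> {z \<in> Op. pos xs z \<le> pos xs y}"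
      proof
        fix z assume z: "z \<in> {z \<in> set xs. g z \<in> c ` {1..j}}"
        then obtain m where zx: "z \<in> set xs" and gz: "g z = c m" and m: "m \<in> {1..j}" by auto
        have zO: "z \<in> Op" using cl1[OF zx gz] .
        have "pos xs z \<le> pos xs y"
        proof (cases "m = j")
          case True
          then have "z = y" using gz gy ginj zx yx by (auto simp: inj_on_def)
          then show ?thesis by simp
        next
          case False
          then have "before ?w (c m) (c j)" using bcc[of m j] j m by auto
          then have "pos xs z < pos xs y" using bef[OF zx yx] gy gz by simp
          then show ?thesis by simp
        qed
        then show "z \<in> {z \<in> Op. pos xs z \<le> pos xs y}" using zO by simp
      qed
    qed
    have img: "g ` {z \<in> set xs. g z \<in> c ` {1..j}} = c ` {1..j}"
    proof
      show "g ` {z \<in> set xs. g z \<in> c ` {1..j}} \<subseteq> c ` {1..j}" by auto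
      show "c ` {1..j} \<subseteq> g ` {z \<in> set xs. g z \<in> c ` {1..j}}"
      proof
        fix u assume u: "u \<in> c ` {1..j}"
        then have "u \<in> set ?w" using setw j by auto
        then obtain z where "z \<in> set xs" "u = g z" by auto
        then show "u \<in> g ` {z \<in> set xs. g z \<in> c ` {1..j}}" using u by auto
      qed
    qed
    have "card {z \<in> set xs. g z \<in> c ` {1..j}} = card (c ` {1..j})"
      using card_image[OF inj_on_subset[OF ginj], of "{z \<in> set xs. g z \<in> c ` {1..j}}"] img by auto
    also have "\<dots> = j" using card_image[OF inj_on_subset[OF c_inj]] by simp
    finally show ?thesis unfolding rk_eq eq .
  qed
  show ?thesis
  proof (cases "x \<in> Op")
    case True
    then obtain j where gx: "g x = c j" using cl1' by blast
    then show ?thesis using main[OF True gx] lab_O[OF True] by simp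
  next
    case False
    then have ax: "\<alpha> x \<in> Op" using notO x by simp
    then obtain j where gx: "g (\<alpha> x) = c j" using cl1' by blast
    have "g x = g (\<alpha> (\<alpha> x))" using al_al x by simp
    also have "\<dots> = bar (g (\<alpha> x))" using gbar al_in x by simp
    also have "\<dots> = cb j" using gx bar_c by simp
    finally show ?thesis using main[OF ax gx] lab_nO[OF x False] by simp
  qed
qed

end

lemma orbit_list:
  assumes p: "p permutes H" and fin: "finite H" and r: "r \<in> H" and cyc: "is_cyclic p H"
  defines "L \<equiv> map (\<lambda>i. (p ^^ i) r) [0..<card H]"
  shows "distinct L" "set L = H" "length L = card H"
    "\<And>i. i < card H \<Longrightarrow> p (L ! i) = L ! (Suc i mod card H)" "L ! 0 = r"
proof -
  have perm: "permutation p" using p fin permutation_permutes by blast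
  let ?d = "least_power p r"
  have dist: "distinct (support p r)" using cycle_of_permutation[OF perm] by simp
  have "set (support p r) = range (\<lambda>i. (p ^^ i) r)" using support_set[OF perm] .
  also have "\<dots> = H"
  proof
    show "range (\<lambda>i. (p ^^ i) r) \<subseteq> H" using permutes_in_funpow_image[OF p r] by auto
    show "H \<subseteq> range (\<lambda>i. (p ^^ i) r)"
    proof
      fix y assume "y \<in> H"
      then obtain k where "(p ^^ k) r = y" using cyc r unfolding is_cyclic_def by blast
      then show "y \<in> range (\<lambda>i. (p ^^ i) r)" by (metis rangeI)
    qed
  qed
  finally have setS: "set (support p r) = H" .
  have d: "?d = card H" using distinct_card[OF dist] setS by simp
  have LS: "L = support p r" unfolding L_def d ..
  show "distinct L" "set L = H" using LS dist setS by auto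
  show "length L = card H" unfolding L_def by simp
  have dpos: "?d > 0" using least_power_of_permutation(2)[OF perm] .
  show "L ! 0 = r" unfolding LS using dpos by simp
  fix i assume i: "i < card H"
  show "p (L ! i) = L ! (Suc i mod card H)"
  proof (cases "Suc i < card H")
    case True then show ?thesis using i unfolding L_def by simp
  next
    case False
    then have "Suc i = card H" using i by simp
    have "L ! i = (p ^^ i) r" using i unfolding L_def by simp
    then have "p (L ! i) = (p ^^ Suc i) r" by simp
    then have "p (L ! i) = (p ^^ ?d) r" using \<open>Suc i = card H\<close> d by simp
    also have "\<dots> = r" using least_power_of_permutation(1)[OF perm] .
    finally show ?thesis using \<open>Suc i = card H\<close> \<open>L ! 0 = r\<close> by simp
  qed
qed

locale cyc_list =
  fixes p :: "'a \<Rightarrow> 'a" and L :: "'a list"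
  assumes dist: "distinct L" and Lne: "L \<noteq> []"
    and nxt: "\<And>i. i < length L \<Longrightarrow> p (L ! i) = L ! (Suc i mod length L)"
begin

abbreviation "N \<equiv> length L"

lemma Npos: "N > 0" using Lne by simp

lemma iter: "i < N \<Longrightarrow> (p ^^ j) (L ! i) = L ! ((i + j) mod N)"
proof (induction j)
  case 0 then show ?case by simp
next
  case (Suc j)
  have "(p ^^ Suc j) (L ! i) = p (L ! ((i + j) mod N))" using Suc by simp
  also have "\<dots> = L ! (Suc ((i + j) mod N) mod N)" using nxt Npos by simp
  also have "Suc ((i + j) mod N) mod N = (i + Suc j) mod N" by (simp add: mod_Suc_eq)
  finally show ?case .
qed

definition cnt :: "'a set \<Rightarrow> nat \<Rightarrow> nat" where
  "cnt P k = length (filter (\<lambda>x. x \<in> P) (take k L))"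

lemma cnt_Suc: "a < N \<Longrightarrow> cnt P (Suc a) = cnt P a + (if L ! a \<in> P then 1 else 0)"
  unfolding cnt_def by (simp add: take_Suc_conv_app_nth)

lemma cnt_const: "a \<le> b \<Longrightarrow> b \<le> N \<Longrightarrow> (\<And>k. a \<le> k \<Longrightarrow> k < b \<Longrightarrow> L ! k \<notin> P) \<Longrightarrow> cnt P b = cnt P a"
proof (induction b)
  case 0 then show ?case by simp
next
  case (Suc b)
  show ?case
  proof (cases "a = Suc b")
    case True then show ?thesis by simp
  next
    case False
    then have "a \<le> b" using Suc by simp
    then have "cnt P b = cnt P a" using Suc by simp
    moreover have "L ! b \<notin> P" using Suc \<open>a \<le> b\<close> by simp
    ultimately show ?thesis using cnt_Suc[of b P] Suc by simp
  qed
qed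

lemma cnt_len: "cnt P N = length (filter (\<lambda>x. x \<in> P) L)" unfolding cnt_def by simp

lemma cnt_nth: assumes "a < N" "L ! a \<in> P" shows "filter (\<lambda>x. x \<in> P) L ! cnt P a = L ! a"
proof -
  have "L = take a L @ L ! a # drop (Suc a) L" using assms id_take_nth_drop by blast
  then have "filter (\<lambda>x. x \<in> P) L = filter (\<lambda>x. x \<in> P) (take a L) @ L ! a # filter (\<lambda>x. x \<in> P) (drop (Suc a) L)"
    using assms by (metis filter.simps(2) filter_append)
  then show ?thesis unfolding cnt_def by (simp add: nth_append)
qed

lemma cnt_lt: assumes "a < N" "L ! a \<in> P" shows "cnt P a < length (filter (\<lambda>x. x \<in> P) L)"
proof -
  have "cnt P (Suc a) = Suc (cnt P a)" using cnt_Suc[of a P] assms by simp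
  moreover have "cnt P (Suc a) \<le> cnt P N" unfolding cnt_def
    by (metis assms(1) Suc_leI length_filter_le append_take_drop_id filter_append length_append le_add1 take_all le_refl min_def take_take)
  ultimately show ?thesis using cnt_len by simp
qed

lemma restr_filter:
  assumes i: "i < length (filter (\<lambda>x. x \<in> P) L)"
  shows "restr p P (filter (\<lambda>x. x \<in> P) L ! i) = filter (\<lambda>x. x \<in> P) L ! (Suc i mod length (filter (\<lambda>x. x \<in> P) L))"
proof -
  let ?LP = "filter (\<lambda>x. x \<in> P) L"
  define x where "x = ?LP ! i"
  have "x \<in> set ?LP" using i x_def nth_mem by blast
  then have xP: "x \<in> P" and xL: "x \<in> set L" by auto
  define a where "a = pos L x"
  have a: "a < N" "L ! a = x" using pos_props[OF xL] a_def by auto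
  have dLP: "distinct ?LP" using dist by simp
  have "?LP ! cnt P a = x" using cnt_nth[of a P] a xP by simp
  moreover have "cnt P a < length ?LP" using cnt_lt[of a P] a xP by simp
  ultimately have ca: "cnt P a = i" using dLP i x_def nth_eq_iff_index_eq by metis
  have cSa: "cnt P (Suc a) = Suc (cnt P a)" using cnt_Suc[of a P] a xP by simp
  have rx: "restr p P x = (p ^^ (LEAST k. k > 0 \<and> (p ^^ k) x \<in> P)) x" using xP by (simp add: restr_def)
  have px: "(p ^^ k) x = L ! ((a + k) mod N)" for k using iter[of a k] a by simp
  show ?thesis
  proof (cases "\<exists>b. a < b \<and> b < N \<and> L ! b \<in> P")
    case True
    define b0 where "b0 = (LEAST b. a < b \<and> b < N \<and> L ! b \<in> P)"
    have b0: "a < b0" "b0 < N" "L ! b0 \<in> P" using LeastI_ex[OF True] unfolding b0_def by blast+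
    have nb: "L ! b \<notin> P" if "a < b" "b < b0" for b
      using not_less_Least[of b "\<lambda>b. a < b \<and> b < N \<and> L ! b \<in> P"] that b0 unfolding b0_def by auto
    have L: "(LEAST k. k > 0 \<and> (p ^^ k) x \<in> P) = b0 - a"
    proof (rule Least_equality)
      show "0 < b0 - a \<and> (p ^^ (b0 - a)) x \<in> P" using b0 px[of "b0 - a"] by simp
      fix y assume y: "0 < y \<and> (p ^^ y) x \<in> P"
      show "b0 - a \<le> y"
      proof (rule ccontr)
        assume "\<not> b0 - a \<le> y"
        then have "a + y < b0" by simp
        then have "(p ^^ y) x = L ! (a + y)" using px[of y] b0 by simp
        then show False using nb[of "a + y"] y \<open>a + y < b0\<close> by simp
      qed
    qed
    have r: "restr p P x = L ! b0" using rx L px[of "b0 - a"] b0 by simp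
    have "cnt P b0 = cnt P (Suc a)" using cnt_const[of "Suc a" b0 P] b0 nb by simp
    then have cb: "cnt P b0 = Suc i" using cSa ca by simp
    have "cnt P b0 < length ?LP" using cnt_lt[of b0 P] b0 by simp
    then have "Suc i mod length ?LP = Suc i" using cb by simp
    moreover have "?LP ! cnt P b0 = L ! b0" using cnt_nth[of b0 P] b0 by simp
    ultimately show ?thesis using r cb x_def by simp
  next
    case False
    have ex: "\<exists>b. b < N \<and> L ! b \<in> P" using a xP by blast
    define b0 where "b0 = (LEAST b. b < N \<and> L ! b \<in> P)"
    have b0: "b0 < N" "L ! b0 \<in> P" using LeastI_ex[OF ex] unfolding b0_def by blast+
    have nb: "L ! b \<notin> P" if "b < b0" for b
      using not_less_Least[of b "\<lambda>b. b < N \<and> L ! b \<in> P"] that b0 unfolding b0_def by auto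
    have nb2: "L ! b \<notin> P" if "a < b" "b < N" for b using False that by blast
    have L: "(LEAST k. k > 0 \<and> (p ^^ k) x \<in> P) = N - a + b0"
    proof (rule Least_equality)
      have "(a + (N - a + b0)) mod N = b0" using a b0 by (simp add: mod_if)
      then show "0 < N - a + b0 \<and> (p ^^ (N - a + b0)) x \<in> P" using b0 px[of "N - a + b0"] a by simp
      fix y assume y: "0 < y \<and> (p ^^ y) x \<in> P"
      show "N - a + b0 \<le> y"
      proof (rule ccontr)
        assume "\<not> N - a + b0 \<le> y"
        then have yl: "y < N - a + b0" by simp
        show False
        proof (cases "a + y < N")
          case True
          then have "(p ^^ y) x = L ! (a + y)" using px[of y] by simp
          then show False using nb2[of "a + y"] y True by simp
        next
          case False
          then have "(a + y) mod N = a + y - N" using yl a b0 by (simp add: mod_if)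
          then have "(p ^^ y) x = L ! (a + y - N)" using px[of y] by simp
          moreover have "a + y - N < b0" using yl False a by simp
          ultimately show False using nb[of "a + y - N"] y by simp
        qed
      qed
    qed
    have "(a + (N - a + b0)) mod N = b0" using a b0 by (simp add: mod_if)
    then have r: "restr p P x = L ! b0" using rx L px[of "N - a + b0"] by simp
    have "cnt P N = cnt P (Suc a)" using cnt_const[of "Suc a" N P] a nb2 by simp
    then have "length ?LP = Suc i" using cSa ca cnt_len by simp
    then have m: "Suc i mod length ?LP = 0" by simp
    have "cnt P b0 = cnt P 0" using cnt_const[of 0 b0 P] b0 nb by simp
    then have "cnt P b0 = 0" by (simp add: cnt_def)
    then have "?LP ! 0 = L ! b0" using cnt_nth[of b0 P] b0 by simp
    then show ?thesis using r m x_def by simp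
  qed
qed

lemma first_filter:
  assumes ne: "filter (\<lambda>x. x \<in> P) L \<noteq> []"
  shows "first_in p P (L ! 0) = filter (\<lambda>x. x \<in> P) L ! 0"
proof -
  obtain y where "y \<in> set L" "y \<in> P" using ne by (auto simp: filter_empty_conv)
  then have ex: "\<exists>b. b < N \<and> L ! b \<in> P" by (metis in_set_conv_nth)
  define b0 where "b0 = (LEAST b. b < N \<and> L ! b \<in> P)"
  have b0: "b0 < N" "L ! b0 \<in> P" using LeastI_ex[OF ex] unfolding b0_def by blast+
  have nb: "L ! b \<notin> P" if "b < b0" for b
    using not_less_Least[of b "\<lambda>b. b < N \<and> L ! b \<in> P"] that b0 unfolding b0_def by auto
  have px: "(p ^^ k) (L ! 0) = L ! (k mod N)" for k using iter[of 0 k] Npos by simp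
  have L: "(LEAST i. (p ^^ i) (L ! 0) \<in> P) = b0"
  proof (rule Least_equality)
    show "(p ^^ b0) (L ! 0) \<in> P" using px[of b0] b0 by simp
    fix y assume y: "(p ^^ y) (L ! 0) \<in> P"
    show "b0 \<le> y"
    proof (rule ccontr)
      assume "\<not> b0 \<le> y"
      then show False using px[of y] nb[of y] y b0 by simp
    qed
  qed
  have "cnt P b0 = cnt P 0" using cnt_const[of 0 b0 P] b0 nb by simp
  then have "cnt P b0 = 0" by (simp add: cnt_def)
  then have "filter (\<lambda>x. x \<in> P) L ! 0 = L ! b0" using cnt_nth[of b0 P] b0 by simp
  then show ?thesis unfolding first_in_def L using px[of b0] b0 by simp
qed

end

lemma perm_exists_period:
  assumes "p permutes H" "finite H" obtains M where "M > 0" "p ^^ M = id"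
  using permutation_is_nilpotent[OF permutes_imp_permutation[OF assms(2,1)]] by blast

lemma restr_shift:
  assumes agree: "\<And>z. z \<in> H \<Longrightarrow> z \<notin> P \<Longrightarrow> q z = p z"
    and pH: "\<And>z. z \<in> H \<Longrightarrow> p z \<in> H"
    and xH: "x \<in> H" and xP: "x \<in> P" and yP: "y \<in> P" and first: "q y = p x"
    and ex: "\<exists>k>0. (p ^^ k) x \<in> P"
  shows "restr q P y = restr p P x"
proof -
  define k0 where "k0 = (LEAST k. k > 0 \<and> (p ^^ k) x \<in> P)"
  have k0: "k0 > 0" "(p ^^ k0) x \<in> P" using LeastI_ex[OF ex] unfolding k0_def by blast+
  have nk: "(p ^^ j) x \<notin> P" if "0 < j" "j < k0" for j
    using not_less_Least[of j "\<lambda>k. k > 0 \<and> (p ^^ k) x \<in> P"] that unfolding k0_def by auto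
  have inH: "(p ^^ j) x \<in> H" for j by (induction j) (use xH pH in auto)
  have eq: "(q ^^ j) y = (p ^^ j) x" if "0 < j" "j \<le> k0" for j
    using that
  proof (induction j)
    case 0 then show ?case by simp
  next
    case (Suc j)
    show ?case
    proof (cases "j = 0")
      case True then show ?thesis using first by simp
    next
      case False
      then have "(q ^^ j) y = (p ^^ j) x" using Suc by simp
      moreover have "(p ^^ j) x \<notin> P" using nk[of j] False Suc by simp
      ultimately have "q ((q ^^ j) y) = p ((p ^^ j) x)" using agree inH by simp
      then show ?thesis by simp
    qed
  qed
  have L: "(LEAST k. k > 0 \<and> (q ^^ k) y \<in> P) = k0"
  proof (rule Least_equality)
    show "0 < k0 \<and> (q ^^ k0) y \<in> P" using k0 eq[of k0] by simp
    fix j assume j: "0 < j \<and> (q ^^ j) y \<in> P"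
    show "k0 \<le> j"
    proof (rule ccontr)
      assume "\<not> k0 \<le> j"
      then show False using eq[of j] nk[of j] j by simp
    qed
  qed
  show ?thesis using L eq[of k0] k0 xP yP unfolding restr_def k0_def by simp
qed

lemma first_agree:
  assumes agree: "\<And>z. z \<in> H \<Longrightarrow> z \<notin> P \<Longrightarrow> q z = p z"
    and pH: "\<And>z. z \<in> H \<Longrightarrow> p z \<in> H"
    and rH: "r \<in> H" and ex: "\<exists>i. (p ^^ i) r \<in> P"
  shows "first_in q P r = first_in p P r"
proof -
  define i0 where "i0 = (LEAST i. (p ^^ i) r \<in> P)"
  have i0: "(p ^^ i0) r \<in> P" using LeastI_ex[OF ex] unfolding i0_def by blast
  have ni: "(p ^^ j) r \<notin> P" if "j < i0" for j
    using not_less_Least[of j "\<lambda>i. (p ^^ i) r \<in> P"] that unfolding i0_def by auto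
  have inH: "(p ^^ j) r \<in> H" for j by (induction j) (use rH pH in auto)
  have eq: "(q ^^ j) r = (p ^^ j) r" if "j \<le> i0" for j
    using that
  proof (induction j)
    case 0 then show ?case by simp
  next
    case (Suc j)
    then have "(q ^^ j) r = (p ^^ j) r" "(p ^^ j) r \<notin> P" using ni[of j] by auto
    then show ?case using agree inH by simp
  qed
  have L: "(LEAST i. (q ^^ i) r \<in> P) = i0"
  proof (rule Least_equality)
    show "(q ^^ i0) r \<in> P" using i0 eq[of i0] by simp
    fix j assume j: "(q ^^ j) r \<in> P"
    show "i0 \<le> j"
    proof (rule ccontr)
      assume "\<not> i0 \<le> j"
      then show False using eq[of j] ni[of j] j by simp
    qed
  qed
  show ?thesis unfolding first_in_def L using eq[of i0] i0_def by simp
qed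

lemma restr_in:
  assumes "x \<in> P" "\<exists>k>0. (p ^^ k) x \<in> P" shows "restr p P x \<in> P"
  using assms LeastI_ex[OF assms(2)] unfolding restr_def by simp

lemma (in cyc_list) cyclic: "is_cyclic p (set L)"
  unfolding is_cyclic_def
proof (intro ballI)
  fix x y assume "x \<in> set L" "y \<in> set L"
  then obtain i j where ij: "i < N" "j < N" "L ! i = x" "L ! j = y" by (metis in_set_conv_nth)
  have "(p ^^ (j + N - i)) x = L ! ((i + (j + N - i)) mod N)" using iter ij by auto
  also have "(i + (j + N - i)) mod N = j" using ij by simp
  finally show "\<exists>k. (p ^^ k) x = y" using ij by blast
qed

lemma cyc_list_filter:
  assumes "cyc_list p L" "filter (\<lambda>x. x \<in> P) L \<noteq> []"
  shows "cyc_list (restr p P) (filter (\<lambda>x. x \<in> P) L)"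
  using assms cyc_list.restr_filter[OF assms(1)] unfolding cyc_list_def by auto

lemma perm_period_pt:
  assumes "p permutes H" "finite H" shows "\<exists>k>0. (p ^^ k) x = x"
proof -
  obtain M where "M > 0" "p ^^ M = id" using perm_exists_period[OF assms] by blast
  then show ?thesis by auto
qed

lemma funpow_period:
  assumes "p ^^ M = id" shows "(p ^^ k) x = (p ^^ (k mod M)) x"
proof -
  have "k = k mod M + M * (k div M)" by simp
  then have "(p ^^ k) x = (p ^^ (k mod M)) ((p ^^ (M * (k div M))) x)"
    by (metis funpow_add comp_apply)
  moreover have "p ^^ (M * (k div M)) = (p ^^ M) ^^ (k div M)" by (simp add: funpow_mult)
  ultimately show ?thesis using assms by simp
qed

lemma back_reach:
  assumes p: "p permutes H" and fin: "finite H" and yS: "y \<notin> S" and ex: "\<exists>k. (p ^^ k) y \<in> S"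
  shows "\<exists>z d. z \<in> S \<and> 0 < d \<and> (p ^^ d) z = y \<and> (\<forall>j. 0 < j \<longrightarrow> j < d \<longrightarrow> (p ^^ j) z \<notin> S)"
proof -
  obtain M where M: "M > 0" "p ^^ M = id" using perm_exists_period[OF p fin] by blast
  obtain k where k: "(p ^^ k) y \<in> S" using ex by blast
  define km where "km = k mod M"
  have kmS: "(p ^^ km) y \<in> S" using k funpow_period[OF M(2), of k y] km_def by simp
  have "km \<noteq> 0"
  proof
    assume "km = 0" then show False using kmS yS by simp
  qed
  moreover have "km < M" using M km_def by simp
  ultimately have exd: "\<exists>d. 0 < d \<and> d \<le> M \<and> (p ^^ (M - d)) y \<in> S"
    using kmS by (intro exI[of _ "M - km"]) auto
  define d0 where "d0 = (LEAST d. 0 < d \<and> d \<le> M \<and> (p ^^ (M - d)) y \<in> S)"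
  have d0: "0 < d0" "d0 \<le> M" "(p ^^ (M - d0)) y \<in> S" using LeastI_ex[OF exd] unfolding d0_def by blast+
  have nd: "\<not> (0 < d \<and> d \<le> M \<and> (p ^^ (M - d)) y \<in> S)" if "d < d0" for d
    using not_less_Least[of d "\<lambda>d. 0 < d \<and> d \<le> M \<and> (p ^^ (M - d)) y \<in> S"] that unfolding d0_def by blast
  define z where "z = (p ^^ (M - d0)) y"
  have "(p ^^ d0) z = (p ^^ (d0 + (M - d0))) y" unfolding z_def by (simp add: funpow_add)
  also have "d0 + (M - d0) = M" using d0 by simp
  finally have zd: "(p ^^ d0) z = y" using M by simp
  have nj: "(p ^^ j) z \<notin> S" if "0 < j" "j < d0" for j
  proof -
    have "(p ^^ j) z = (p ^^ (j + (M - d0))) y" unfolding z_def by (simp add: funpow_add)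
    also have "j + (M - d0) = M - (d0 - j)" using that d0 by simp
    finally show ?thesis using nd[of "d0 - j"] that d0 by simp
  qed
  have zS: "z \<in> S" using d0(3) unfolding z_def .
  show ?thesis
    apply (rule exI[of _ z], rule exI[of _ d0])
    using zS d0(1) zd nj by blast
qed

locale premap =
  fixes H :: "'a set" and s a :: "'a \<Rightarrow> 'a" and S :: "'a set"
  assumes fin: "finite H" and sp: "s permutes H" and ap: "a permutes H"
    and ainv: "\<And>h. h \<in> H \<Longrightarrow> a h \<noteq> h \<and> a (a h) = h"
    and SH: "S \<subseteq> H" and aS: "\<And>h. h \<in> S \<Longrightarrow> a h \<in> S"
begin

abbreviation "\<theta> \<equiv> motion s a S"
abbreviation "\<phi> \<equiv> face_perm s a"

lemma sH: "h \<in> H \<Longrightarrow> s h \<in> H" using sp by (simp add: permutes_in_image)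
lemma aH: "h \<in> H \<Longrightarrow> a h \<in> H" using ap by (simp add: permutes_in_image)
lemma aa: "h \<in> H \<Longrightarrow> a (a h) = h" using ainv by simp
lemma a_nS: "h \<in> H \<Longrightarrow> h \<notin> S \<Longrightarrow> a h \<notin> S" using aS aa by metis

lemma theta_perm: "\<theta> permutes H"
proof -
  define g where "g h = (if h \<in> S then a h else h)" for h
  have gg: "g (g h) = h" for h using aS aa SH unfolding g_def by auto
  have "bij g" using gg by (rule involuntory_imp_bij)
  moreover have "g ` H = H"
  proof
    show "g ` H \<subseteq> H" using aH unfolding g_def by auto
    show "H \<subseteq> g ` H"
    proof
      fix h assume "h \<in> H"
      then have "g h \<in> H" using aH unfolding g_def by auto
      then show "h \<in> g ` H" using gg[of h] by (metis imageI)
    qed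
  qed
  ultimately have "bij_betw g H H" using bij_betw_subset by blast
  moreover have "\<And>x. x \<notin> H \<Longrightarrow> g x = x" using SH unfolding g_def by auto
  ultimately have "g permutes H" by (rule bij_imp_permutes)
  then have "s \<circ> g permutes H" using sp by (rule permutes_compose)
  moreover have "\<theta> = s \<circ> g" unfolding g_def motion_def by (rule ext) simp
  ultimately show ?thesis by simp
qed

lemma phi_perm: "\<phi> permutes H"
proof -
  have "s \<circ> a permutes H" using ap sp by (rule permutes_compose)
  moreover have "\<phi> = s \<circ> a" unfolding face_perm_def by (rule ext) simp
  ultimately show ?thesis by simp
qed

lemma thH: "h \<in> H \<Longrightarrow> \<theta> h \<in> H" using theta_perm by (simp add: permutes_in_image)
lemma phH: "h \<in> H \<Longrightarrow> \<phi> h \<in> H" using phi_perm by (simp add: permutes_in_image)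

lemma restr_a1: assumes "h \<in> T" "a h \<in> T" shows "restr a T h = a h"
proof -
  have "(LEAST k. k > 0 \<and> (a ^^ k) h \<in> T) = 1"
    by (rule Least_equality) (use assms in auto)
  then show ?thesis using assms unfolding restr_def by simp
qed

lemma restr_aS: "h \<in> S \<Longrightarrow> restr a S h = a h" using restr_a1 aS by blast
lemma restr_aB: "h \<in> H - S \<Longrightarrow> restr a (H - S) h = a h" using restr_a1 a_nS aH by blast

lemma C1: assumes h: "h \<in> S" shows "restr \<theta> S h = restr s S (a h)"
proof (rule restr_shift[where H=H])
  show "\<And>z. z \<in> H \<Longrightarrow> z \<notin> S \<Longrightarrow> \<theta> z = s z" by (simp add: motion_def)
  show "\<And>z. z \<in> H \<Longrightarrow> s z \<in> H" by (rule sH)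
  show "a h \<in> H" "a h \<in> S" "h \<in> S" using h aS SH by auto
  show "\<theta> h = s (a h)" using h by (simp add: motion_def)
  show "\<exists>k>0. (s ^^ k) (a h) \<in> S" using perm_period_pt[OF sp fin, of "a h"] h aS by auto
qed

lemma C2: assumes h: "h \<in> H - S" shows "restr \<theta> (H - S) h = restr \<phi> (H - S) (a h)"
proof (rule restr_shift[where H=H])
  show "\<And>z. z \<in> H \<Longrightarrow> z \<notin> H - S \<Longrightarrow> \<theta> z = \<phi> z" by (simp add: motion_def face_perm_def)
  show "\<And>z. z \<in> H \<Longrightarrow> \<phi> z \<in> H" by (rule phH)
  show "a h \<in> H" "a h \<in> H - S" "h \<in> H - S" using h aH a_nS by auto
  show "\<theta> h = \<phi> (a h)" using h aa by (simp add: motion_def face_perm_def)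
  show "\<exists>k>0. (\<phi> ^^ k) (a h) \<in> H - S" using perm_period_pt[OF phi_perm fin, of "a h"] h aH a_nS by auto
qed

lemma faceA: "h \<in> S \<Longrightarrow> face_perm (restr s S) (restr a S) h = restr \<theta> S h"
  using C1 restr_aS by (simp add: face_perm_def)

lemma faceB: "h \<in> H - S \<Longrightarrow> face_perm (restr \<phi> (H - S)) (restr a (H - S)) h = restr \<theta> (H - S) h"
  using C2 restr_aB by (simp add: face_perm_def)

lemma firstA: assumes "r \<in> H" "\<exists>i. (s ^^ i) r \<in> S" shows "first_in \<theta> S r = first_in s S r"
  by (rule first_agree[where H=H]) (use assms sH in \<open>auto simp: motion_def\<close>)

lemma firstB: assumes "r \<in> H" "\<exists>i. (\<theta> ^^ i) r \<in> H - S" shows "first_in \<theta> (H - S) r = first_in \<phi> (H - S) r"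
proof -
  have "first_in \<phi> (H - S) r = first_in \<theta> (H - S) r"
    by (rule first_agree[where H=H]) (use assms thH in \<open>auto simp: motion_def face_perm_def\<close>)
  then show ?thesis by simp
qed

lemma theta_cyclic:
  assumes cov: "(\<forall>h\<in>H. \<exists>k. (s ^^ k) h \<in> S) \<or> (S = {} \<and> is_cyclic s H)"
    and fc: "is_cyclic (face_perm (restr s S) (restr a S)) S"
  shows "is_cyclic \<theta> H"
proof (cases "S = {}")
  case True
  have th: "\<theta> = s" unfolding motion_def True by (rule ext) simp
  show ?thesis
  proof (cases "H = {}")
    case True then show ?thesis by (simp add: is_cyclic_def)
  next
    case False
    then have "is_cyclic s H" using cov \<open>S = {}\<close> by auto
    then show ?thesis using th by simp
  qed
next
  case False
  then obtain x0 where x0: "x0 \<in> S" by blast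
  have covS: "\<forall>h\<in>H. \<exists>k. (s ^^ k) h \<in> S" using cov False by blast
  let ?F = "face_perm (restr s S) (restr a S)"
  have exS: "\<exists>k>0. (\<theta> ^^ k) z \<in> S" if "z \<in> S" for z
    using perm_period_pt[OF theta_perm fin, of z] that by auto
  have reachF: "(\<exists>k. (\<theta> ^^ k) x0 = (?F ^^ m) x0) \<and> (?F ^^ m) x0 \<in> S" for m
  proof (induction m)
    case 0 then show ?case using x0 by (auto intro: exI[of _ 0])
  next
    case (Suc m)
    then obtain k where k: "(\<theta> ^^ k) x0 = (?F ^^ m) x0" and zS: "(?F ^^ m) x0 \<in> S" by blast
    define z where "z = (?F ^^ m) x0"
    have "?F z = restr \<theta> S z" using faceA zS z_def by simp
    also have "\<dots> = (\<theta> ^^ (LEAST j. j > 0 \<and> (\<theta> ^^ j) z \<in> S)) z" using zS z_def by (simp add: restr_def)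
    finally have Fz: "?F z = (\<theta> ^^ (LEAST j. j > 0 \<and> (\<theta> ^^ j) z \<in> S)) z" .
    have FzS: "?F z \<in> S" using faceA zS z_def restr_in[OF _ exS] by simp
    have "(\<theta> ^^ ((LEAST j. j > 0 \<and> (\<theta> ^^ j) z \<in> S) + k)) x0 = ?F z"
      using Fz k z_def by (simp add: funpow_add)
    then show ?case using FzS z_def by auto
  qed
  have reach: "\<exists>k. (\<theta> ^^ k) x0 = y" if y: "y \<in> H" for y
  proof (cases "y \<in> S")
    case True
    then obtain m where "(?F ^^ m) x0 = y" using fc x0 unfolding is_cyclic_def by blast
    then show ?thesis using reachF[of m] by auto
  next
    case False
    obtain z' d where zd: "z' \<in> S" "0 < d" "(s ^^ d) z' = y" "\<forall>j. 0 < j \<longrightarrow> j < d \<longrightarrow> (s ^^ j) z' \<notin> S"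
      using back_reach[OF sp fin False] covS y by blast
    define z where "z = a z'"
    have zS: "z \<in> S" using zd aS z_def by simp
    have zH: "z' \<in> H" using zd SH by auto
    have inH: "(s ^^ j) z' \<in> H" for j by (induction j) (use zH sH in auto)
    have eq: "(\<theta> ^^ j) z = (s ^^ j) z'" if "0 < j" "j \<le> d" for j
      using that
    proof (induction j)
      case 0 then show ?case by simp
    next
      case (Suc j)
      show ?case
      proof (cases "j = 0")
        case True then show ?thesis using zS z_def aa zH by (simp add: motion_def)
      next
        case False
        then have e: "(\<theta> ^^ j) z = (s ^^ j) z'" and n: "(s ^^ j) z' \<notin> S" using Suc zd by auto
        have "(\<theta> ^^ Suc j) z = \<theta> ((s ^^ j) z')" using e by simp
        also have "\<dots> = s ((s ^^ j) z')" using n by (simp add: motion_def)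
        finally show ?thesis by simp
      qed
    qed
    have "(\<theta> ^^ d) z = y" using eq[of d] zd by simp
    moreover obtain k where "(\<theta> ^^ k) x0 = z"
    proof -
      obtain m where "(?F ^^ m) x0 = z" using fc x0 zS unfolding is_cyclic_def by blast
      then show ?thesis using reachF[of m] that by blast
    qed
    ultimately have "(\<theta> ^^ (d + k)) x0 = y" by (simp add: funpow_add)
    then show ?thesis by blast
  qed
  obtain M where M: "M > 0" "\<theta> ^^ M = id" using perm_exists_period[OF theta_perm fin] by blast
  show ?thesis unfolding is_cyclic_def
  proof (intro ballI)
    fix u v assume "u \<in> H" "v \<in> H"
    then obtain i j where ij: "(\<theta> ^^ i) x0 = u" "(\<theta> ^^ j) x0 = v" using reach by blast
    have "(\<theta> ^^ (j + M * i - i)) u = (\<theta> ^^ (j + M * i - i + i)) x0" using ij by (simp add: funpow_add)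
    also have "j + M * i - i + i = j + M * i"
    proof -
      have le: "i \<le> M * i" using M by simp
      show ?thesis using le by linarith
    qed
    also have "(\<theta> ^^ (j + M * i)) x0 = (\<theta> ^^ j) (((\<theta> ^^ M) ^^ i) x0)" by (simp add: funpow_add funpow_mult)
    also have "\<dots> = v" using M ij by simp
    finally show "\<exists>k. (\<theta> ^^ k) u = v" by blast
  qed
qed

end

lemma isB_iff: "isB x \<longleftrightarrow> \<not> isA x" by (cases x) auto

lemma distinct_filters: "distinct (filter P xs) \<Longrightarrow> distinct (filter (\<lambda>x. \<not> P x) xs) \<Longrightarrow> distinct xs"
proof (induction xs)
  case Nil then show ?case by simp
next
  case (Cons x xs)
  have d1: "distinct (filter P xs)" using Cons.prems(1) by (cases "P x") simp_all
  have d2: "distinct (filter (\<lambda>x. \<not> P x) xs)" using Cons.prems(2) by (cases "P x") simp_all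
  have dx: "distinct xs" using Cons.IH d1 d2 by blast
  have "x \<notin> set xs"
  proof
    assume xs: "x \<in> set xs"
    show False
    proof (cases "P x")
      case True
      then have "x \<in> set (filter P xs)" using xs by simp
      then show False using Cons.prems(1) True by simp
    next
      case False
      then have "x \<in> set (filter (\<lambda>x. \<not> P x) xs)" using xs by simp
      then show False using Cons.prems(2) False by simp
    qed
  qed
  then show ?case using dx by simp
qed

lemma code_shuffle_distinct: "code_shuffle k l w \<Longrightarrow> distinct w"
proof -
  assume "code_shuffle k l w"
  then have "distinct (filter isA w)" "distinct (filter isB w)" unfolding code_shuffle_def ucode_def by blast+
  moreover have "filter isB w = filter (\<lambda>x. \<not> isA x) w" by (rule filter_cong) (simp_all add: isB_iff)
  ultimately have "distinct (filter isA w)" "distinct (filter (\<lambda>x. \<not> isA x) w)" by simp_all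
  then show "distinct w" by (rule distinct_filters)
qed

lemma filter_map_pred:
  assumes "\<And>h. h \<in> set L \<Longrightarrow> Q (f h) \<longleftrightarrow> h \<in> P"
  shows "filter Q (map f L) = map f (filter (\<lambda>x. x \<in> P) L)"
  using assms by (induction L) auto

lemma lab_isA: "isA (lab LA LAb xs \<alpha> x)" by (simp add: lab_def)
lemma lab_isB: "\<not> isA (lab LB LBb xs \<alpha> x)" by (simp add: lab_def)

lemma ucode0: "ucode c cb 0 []" by (simp add: ucode_def)

lemma covered_premap: "covered_map H s a r S \<Longrightarrow> premap H s a S"
  unfolding covered_map_def is_map_def premap_def by (auto simp: image_subset_iff)

locale covctx = premap +
  fixes r :: 'a
  assumes cov: "covered_map H s a r S" and Hne: "H \<noteq> {}"
begin

lemma rH: "r \<in> H" using cov Hne by (simp add: covered_map_def is_map_def)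

lemma covS: "(\<forall>h\<in>H. \<exists>k. (s ^^ k) h \<in> S) \<or> (S = {} \<and> is_cyclic s H)"
  using cov by (simp add: covered_map_def)

lemma th_cyc: "is_cyclic \<theta> H"
  using theta_cyclic covS cov by (simp add: covered_map_def)

definition "L = map (\<lambda>i. (\<theta> ^^ i) r) [0..<card H]"

lemma L: "distinct L" "set L = H" "length L = card H"
    "\<And>i. i < card H \<Longrightarrow> \<theta> (L ! i) = L ! (Suc i mod card H)" "L ! 0 = r"
  using orbit_list[OF theta_perm fin rH th_cyc] unfolding L_def by auto

lemma cardpos: "card H > 0" using fin Hne by (simp add: card_gt_0_iff)

lemma cycL: "cyc_list \<theta> L"
  unfolding cyc_list_def using L Hne fin by auto

definition "LS = filter (\<lambda>x. x \<in> S) L"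
definition "LBl = filter (\<lambda>x. x \<in> H - S) L"

lemma setLS: "set LS = S" using L SH unfolding LS_def by auto
lemma setLB: "set LBl = H - S" using L unfolding LBl_def by auto
lemma lenLS: "length LS = card S" using setLS L distinct_card[of LS] unfolding LS_def by simp
lemma lenLB: "length LBl = card (H - S)" using setLB L distinct_card[of LBl] unfolding LBl_def by simp

lemma invS: "invol a (set LS)" unfolding invol_def setLS using aS ainv SH by auto
lemma invB: "invol a (set LBl)" unfolding invol_def setLB using a_nS ainv aH by auto

lemma lcA: "labctx LA LAb LS a"
  unfolding labctx_def labctx_axioms_def using alph_A invS L(1) LS_def by simp
lemma lcB: "labctx LB LBb LBl a"
  unfolding labctx_def labctx_axioms_def using alph_B invB L(1) LBl_def by simp

definition "lam h = (if h \<in> S then lab LA LAb LS a h else lab LB LBb LBl a h)"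

definition "w = map lam L"

lemma lam_isA: "isA (lam h) \<longleftrightarrow> h \<in> S" by (simp add: lam_def lab_isA lab_isB)

lemma fA: "filter isA w = map lam LS"
  unfolding w_def LS_def using lam_isA by (rule filter_map_pred)

lemma fB: "filter isB w = map lam LBl"
  unfolding w_def LBl_def
proof (rule filter_map_pred)
  fix h assume "h \<in> set L"
  then show "isB (lam h) \<longleftrightarrow> h \<in> H - S" using lam_isA L(2) isB_iff by auto
qed

lemma mapA: "map lam LS = map (lab LA LAb LS a) LS"
  using setLS unfolding lam_def by simp
lemma mapB: "map lam LBl = map (lab LB LBb LBl a) LBl"
  using setLB unfolding lam_def by auto

lemma w_shuffle: "code_shuffle (card S div 2) (card (H - S) div 2) w"
  unfolding code_shuffle_def fA fB mapA mapB
  using labctx.lab_ucode[OF lcA] labctx.lab_ucode[OF lcB] lenLS lenLB by simp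

lemma w_dist: "distinct w" using code_shuffle_distinct[OF w_shuffle] .

lemma lam_inj: "inj_on lam H" using w_dist L(2) unfolding w_def by (simp add: distinct_map)

lemma lam_bar: "h \<in> H \<Longrightarrow> lam (a h) = bar (lam h)"
proof -
  assume h: "h \<in> H"
  show "lam (a h) = bar (lam h)"
  proof (cases "h \<in> S")
    case True
    then show ?thesis using labctx.lab_bar[OF lcA, of h] setLS aS unfolding lam_def by simp
  next
    case False
    then show ?thesis using labctx.lab_bar[OF lcB, of h] setLB a_nS h unfolding lam_def by simp
  qed
qed

lemma w_code: "covered_code H s a r S w"
  unfolding covered_code_def
proof (intro conjI exI[of _ lam])
  show "code_shuffle (card S div 2) (card (H - S) div 2) w" by (rule w_shuffle)
  show "bij_betw lam H (set w)" using lam_inj L(2) unfolding w_def bij_betw_def by simp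
  show "\<forall>h\<in>H. isA (lam h) = (h \<in> S)" using lam_isA by simp
  show "\<forall>h\<in>H. lam (a h) = bar (lam h)" using lam_bar by simp
  show "H \<noteq> {} \<longrightarrow> lam r = w ! 0" using L cardpos unfolding w_def by simp
  show "\<forall>h\<in>H. \<forall>i<length w. lam h = w ! i \<longrightarrow> lam (\<theta> h) = w ! (Suc i mod length w)"
  proof (intro ballI allI impI)
    fix h i assume h: "h \<in> H" and i: "i < length w" and e: "lam h = w ! i"
    have iN: "i < card H" using i L unfolding w_def by simp
    have "lam h = lam (L ! i)" using e iN L unfolding w_def by simp
    then have "h = L ! i" using lam_inj h iN L by (metis inj_on_def nth_mem)
    then have "\<theta> h = L ! (Suc i mod card H)" using L iN by simp
    moreover have "Suc i mod card H < card H" using iN by simp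
    ultimately show "lam (\<theta> h) = w ! (Suc i mod length w)" using L unfolding w_def by simp
  qed
qed

lemma code_is_map:
  assumes "covered_code H s a r S w'"
  obtains f where "w' = map f L" "bij_betw f H (set w')" "\<forall>h\<in>H. isA (f h) \<longleftrightarrow> h \<in> S"
    "\<forall>h\<in>H. f (a h) = bar (f h)" "code_shuffle (card S div 2) (card (H - S) div 2) w'"
proof -
  obtain f where sh: "code_shuffle (card S div 2) (card (H - S) div 2) w'"
    and bij: "bij_betw f H (set w')" and fA: "\<forall>h\<in>H. isA (f h) \<longleftrightarrow> h \<in> S"
    and fb: "\<forall>h\<in>H. f (a h) = bar (f h)"
    and fm: "\<forall>h\<in>H. \<forall>i<length w'. f h = w' ! i \<longrightarrow> f (\<theta> h) = w' ! (Suc i mod length w')"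
    and fr: "H \<noteq> {} \<longrightarrow> f r = w' ! 0"
    using assms unfolding covered_code_def by blast
  have d: "distinct w'" using code_shuffle_distinct[OF sh] .
  have len: "length w' = card H" using bij_betw_same_card[OF bij] distinct_card[OF d] by simp
  have nth: "w' ! i = f (L ! i)" if "i < card H" for i
    using that
  proof (induction i)
    case 0 then show ?case using fr Hne L by simp
  next
    case (Suc i)
    then have e: "f (L ! i) = w' ! i" by simp
    have "L ! i \<in> H" using L Suc by (metis Suc_lessD nth_mem)
    moreover have "i < length w'" using len Suc by simp
    ultimately have "f (\<theta> (L ! i)) = w' ! (Suc i mod length w')" using fm e by blast
    moreover have "Suc i mod length w' = Suc i" using len Suc by simp
    moreover have "\<theta> (L ! i) = L ! Suc i" using L(4)[of i] Suc by simp
    ultimately show ?case by simp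
  qed
  have "w' = map f L" by (rule nth_equalityI) (use len L nth in auto)
  then show ?thesis using that bij fA fb sh by blast
qed

lemma code_unique:
  assumes "covered_code H s a r S w'" shows "w' = w"
proof -
  obtain f where wf: "w' = map f L" and bij: "bij_betw f H (set w')" and fA: "\<forall>h\<in>H. isA (f h) \<longleftrightarrow> h \<in> S"
    and fb: "\<forall>h\<in>H. f (a h) = bar (f h)" and sh: "code_shuffle (card S div 2) (card (H - S) div 2) w'"
    using code_is_map[OF assms] by blast
  have finj: "inj_on f H" using bij by (simp add: bij_betw_def)
  have "filter isA w' = map f LS" unfolding wf LS_def by (rule filter_map_pred) (use fA L in auto)
  then have ucA: "ucode LA LAb (length LS div 2) (map f LS)" using sh lenLS by (simp add: code_shuffle_def)
  have "filter isB w' = map f LBl" unfolding wf LBl_def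
    by (rule filter_map_pred) (use fA L isB_iff in auto)
  then have ucB: "ucode LB LBb (length LBl div 2) (map f LBl)" using sh lenLB by (simp add: code_shuffle_def)
  have eqA: "f h = lab LA LAb LS a h" if "h \<in> S" for h
    using labctx.lab_unique[OF lcA ucA] finj setLS SH fb that by (auto intro: inj_on_subset)
  have eqB: "f h = lab LB LBb LBl a h" if "h \<in> H - S" for h
    using labctx.lab_unique[OF lcB ucB] finj setLB fb that by (auto intro: inj_on_subset)
  have "\<forall>h\<in>H. f h = lam h" using eqA eqB unfolding lam_def by auto
  then show ?thesis unfolding wf w_def using L(2) by simp
qed

lemma restrA:
  assumes "covered_code H s a r S w'"
  shows "umap_code LA LAb S (restr s S) (restr a S) (first_in s S r) (filter isA w')"
proof -
  obtain f where wf: "w' = map f L" and bij: "bij_betw f H (set w')" and fA: "\<forall>h\<in>H. isA (f h) \<longleftrightarrow> h \<in> S"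
    and fb: "\<forall>h\<in>H. f (a h) = bar (f h)" and sh: "code_shuffle (card S div 2) (card (H - S) div 2) w'"
    using code_is_map[OF assms] by blast
  have finj: "inj_on f S" using bij SH by (auto simp: bij_betw_def intro: inj_on_subset)
  have u: "filter isA w' = map f LS" unfolding wf LS_def by (rule filter_map_pred) (use fA L in auto)
  show ?thesis unfolding umap_code_def
  proof (intro conjI exI[of _ f])
    show "ucode LA LAb (card S div 2) (filter isA w')" using sh by (simp add: code_shuffle_def)
    show "bij_betw f S (set (filter isA w'))" unfolding u using finj setLS by (simp add: bij_betw_def)
    show "\<forall>h\<in>S. f (restr a S h) = bar (f h)" using restr_aS fb SH by auto
    show "\<forall>h\<in>S. \<forall>i<length (filter isA w'). f h = filter isA w' ! i \<longrightarrow>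
            f (face_perm (restr s S) (restr a S) h) = filter isA w' ! (Suc i mod length (filter isA w'))"
    proof (intro ballI allI impI)
      fix h i assume h: "h \<in> S" and i: "i < length (filter isA w')" and e: "f h = filter isA w' ! i"
      have iL: "i < length LS" using i u by simp
      have "f h = f (LS ! i)" using e u iL by simp
      moreover have "LS ! i \<in> S" using iL setLS nth_mem by blast
      ultimately have hi: "h = LS ! i" using finj h by (auto simp: inj_on_def)
      have "face_perm (restr s S) (restr a S) h = restr \<theta> S h" using faceA h by simp
      also have "\<dots> = LS ! (Suc i mod length LS)" unfolding hi LS_def
        by (rule cyc_list.restr_filter[OF cycL]) (use iL LS_def in simp)
      finally have "face_perm (restr s S) (restr a S) h = LS ! (Suc i mod length LS)" .
      moreover have "Suc i mod length LS < length LS" using iL mod_less_divisor[of "length LS" "Suc i"] by linarith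
      ultimately show "f (face_perm (restr s S) (restr a S) h) = filter isA w' ! (Suc i mod length (filter isA w'))"
        using u by simp
    qed
    show "S \<noteq> {} \<longrightarrow> f (first_in s S r) = filter isA w' ! 0"
    proof
      assume Sne: "S \<noteq> {}"
      then have "\<forall>h\<in>H. \<exists>k. (s ^^ k) h \<in> S" using covS by blast
      then have "first_in \<theta> S r = first_in s S r" using firstA rH by blast
      moreover have LSne: "LS \<noteq> []" using setLS Sne by auto
      moreover have "first_in \<theta> S (L ! 0) = LS ! 0"
        using cyc_list.first_filter[OF cycL] LSne unfolding LS_def by blast
      ultimately have "first_in s S r = LS ! 0" using L(5) by simp
      then show "f (first_in s S r) = filter isA w' ! 0" using u LSne by simp
    qed
  qed
qed

lemma restrB:
  assumes "covered_code H s a r S w'"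
  shows "umap_code LB LBb (H - S) (restr \<phi> (H - S)) (restr a (H - S)) (first_in \<phi> (H - S) r) (filter isB w')"
proof -
  obtain f where wf: "w' = map f L" and bij: "bij_betw f H (set w')" and fA: "\<forall>h\<in>H. isA (f h) \<longleftrightarrow> h \<in> S"
    and fb: "\<forall>h\<in>H. f (a h) = bar (f h)" and sh: "code_shuffle (card S div 2) (card (H - S) div 2) w'"
    using code_is_map[OF assms] by blast
  have finj: "inj_on f (H - S)" using bij by (auto simp: bij_betw_def intro: inj_on_subset)
  have u: "filter isB w' = map f LBl" unfolding wf LBl_def by (rule filter_map_pred) (use fA L isB_iff in auto)
  show ?thesis unfolding umap_code_def
  proof (intro conjI exI[of _ f])
    show "ucode LB LBb (card (H - S) div 2) (filter isB w')" using sh by (simp add: code_shuffle_def)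
    show "bij_betw f (H - S) (set (filter isB w'))" unfolding u using finj setLB by (simp add: bij_betw_def)
    show "\<forall>h\<in>H - S. f (restr a (H - S) h) = bar (f h)" using restr_aB fb by auto
    show "\<forall>h\<in>H - S. \<forall>i<length (filter isB w'). f h = filter isB w' ! i \<longrightarrow>
            f (face_perm (restr \<phi> (H - S)) (restr a (H - S)) h) = filter isB w' ! (Suc i mod length (filter isB w'))"
    proof (intro ballI allI impI)
      fix h i assume h: "h \<in> H - S" and i: "i < length (filter isB w')" and e: "f h = filter isB w' ! i"
      have iL: "i < length LBl" using i u by simp
      have "f h = f (LBl ! i)" using e u iL by simp
      moreover have "LBl ! i \<in> H - S" using iL setLB nth_mem by blast
      ultimately have hi: "h = LBl ! i" using finj h by (auto simp: inj_on_def)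
      have "face_perm (restr \<phi> (H - S)) (restr a (H - S)) h = restr \<theta> (H - S) h" using faceB h by simp
      also have "\<dots> = LBl ! (Suc i mod length LBl)" unfolding hi LBl_def
        by (rule cyc_list.restr_filter[OF cycL]) (use iL LBl_def in simp)
      finally have "face_perm (restr \<phi> (H - S)) (restr a (H - S)) h = LBl ! (Suc i mod length LBl)" .
      moreover have "Suc i mod length LBl < length LBl" using iL mod_less_divisor[of "length LBl" "Suc i"] by linarith
      ultimately show "f (face_perm (restr \<phi> (H - S)) (restr a (H - S)) h) = filter isB w' ! (Suc i mod length (filter isB w'))"
        using u by simp
    qed
    show "H - S \<noteq> {} \<longrightarrow> f (first_in \<phi> (H - S) r) = filter isB w' ! 0"
    proof
      assume Sne: "H - S \<noteq> {}"
      then obtain y where y: "y \<in> H - S" by blast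
      then obtain k where "(\<theta> ^^ k) r = y" using th_cyc rH unfolding is_cyclic_def by blast
      then have "\<exists>i. (\<theta> ^^ i) r \<in> H - S" using y by blast
      then have "first_in \<theta> (H - S) r = first_in \<phi> (H - S) r" using firstB rH by blast
      moreover have LBne: "LBl \<noteq> []" using setLB Sne by auto
      moreover have "first_in \<theta> (H - S) (L ! 0) = LBl ! 0"
        using cyc_list.first_filter[OF cycL] LBne unfolding LBl_def by blast
      ultimately have "first_in \<phi> (H - S) r = LBl ! 0" using L(5) by simp
      then show "f (first_in \<phi> (H - S) r) = filter isB w' ! 0" using u LBne by simp
    qed
  qed
qed

end

definition nx :: "letter list \<Rightarrow> letter \<Rightarrow> letter" where
  "nx w x = w ! (Suc (pos w x) mod length w)"

definition sig :: "letter list \<Rightarrow> letter \<Rightarrow> letter" where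
  "sig w x = (if isA x then nx w (bar x) else nx w x)"

lemma code_sig:
  assumes cm: "covered_map H s a r S" and cc: "covered_code H s a r S w"
  obtains f where "bij_betw f H (set w)" "\<forall>h\<in>H. isA (f h) \<longleftrightarrow> h \<in> S"
    "\<forall>h\<in>H. f (a h) = bar (f h)" "\<forall>h\<in>H. f (s h) = sig w (f h)" "H \<noteq> {} \<longrightarrow> f r = w ! 0"
proof -
  interpret premap H s a S using covered_premap[OF cm] .
  obtain f where sh: "code_shuffle (card S div 2) (card (H - S) div 2) w"
    and bij: "bij_betw f H (set w)" and fA: "\<forall>h\<in>H. isA (f h) \<longleftrightarrow> h \<in> S"
    and fb: "\<forall>h\<in>H. f (a h) = bar (f h)"
    and fm: "\<forall>h\<in>H. \<forall>i<length w. f h = w ! i \<longrightarrow> f (\<theta> h) = w ! (Suc i mod length w)"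
    and fr: "H \<noteq> {} \<longrightarrow> f r = w ! 0"
    using cc unfolding covered_code_def apply (elim conjE exE) apply (rule that) apply assumption+ done
  have fnx: "f (\<theta> h) = nx w (f h)" if h: "h \<in> H" for h
  proof -
    have "f h \<in> set w" using bij h by (auto simp: bij_betw_def)
    then have p: "pos w (f h) < length w" "w ! pos w (f h) = f h" using pos_props[of "f h" w] by simp_all
    have "f (\<theta> h) = w ! (Suc (pos w (f h)) mod length w)"
      using fm[rule_format, OF h p(1) p(2)[symmetric]] .
    then show ?thesis unfolding nx_def .
  qed
  have "\<forall>h\<in>H. f (s h) = sig w (f h)"
  proof
    fix h assume h: "h \<in> H"
    show "f (s h) = sig w (f h)"
    proof (cases "h \<in> S")
      case True
      then have ah: "a h \<in> S" "a h \<in> H" using aS SH by auto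
      have "\<theta> (a h) = s h" using ah aa h by (simp add: motion_def)
      then have "f (s h) = nx w (f (a h))" using fnx[OF ah(2)] by simp
      moreover have "f (a h) = bar (f h)" using fb h by blast
      moreover have "isA (f h)" using fA h True by blast
      ultimately show ?thesis unfolding sig_def by simp
    next
      case False
      then have "\<theta> h = s h" by (simp add: motion_def)
      moreover have "\<not> isA (f h)" using fA h False by blast
      ultimately show ?thesis using fnx[OF h] unfolding sig_def by simp
    qed
  qed
  then show ?thesis using that[OF bij fA fb _ fr] by blast
qed

lemma part2:
  assumes cm: "covered_map H s a r S" and cm': "covered_map H' s' a' r' S'"
    and cc: "covered_code H s a r S w" and cc': "covered_code H' s' a' r' S' w"
  shows "iso_covered H s a r S H' s' a' r' S'"
proof -
  interpret P1: premap H s a S using covered_premap[OF cm] .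
  interpret P2: premap H' s' a' S' using covered_premap[OF cm'] .
  obtain f where fb: "bij_betw f H (set w)" and fA: "\<forall>h\<in>H. isA (f h) \<longleftrightarrow> h \<in> S"
    and fa: "\<forall>h\<in>H. f (a h) = bar (f h)" and fs: "\<forall>h\<in>H. f (s h) = sig w (f h)" and fr: "H \<noteq> {} \<longrightarrow> f r = w ! 0"
    using code_sig[OF cm cc] by blast
  obtain g where gb: "bij_betw g H' (set w)" and gA: "\<forall>h\<in>H'. isA (g h) \<longleftrightarrow> h \<in> S'"
    and ga: "\<forall>h\<in>H'. g (a' h) = bar (g h)" and gs: "\<forall>h\<in>H'. g (s' h) = sig w (g h)" and gr: "H' \<noteq> {} \<longrightarrow> g r' = w ! 0"
    using code_sig[OF cm' cc'] by blast
  define F where "F = inv_into H' g \<circ> f"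
  have gi: "bij_betw (inv_into H' g) (set w) H'" using bij_betw_inv_into[OF gb] .
  have Fb: "bij_betw F H H'" unfolding F_def using bij_betw_trans[OF fb gi] .
  have ginj: "inj_on g H'" using gb by (simp add: bij_betw_def)
  have gF: "g (F h) = f h" if "h \<in> H" for h
  proof -
    have "f h \<in> g ` H'" using fb gb that by (auto simp: bij_betw_def)
    then show ?thesis unfolding F_def by (simp add: f_inv_into_f)
  qed
  have FH: "F h \<in> H'" if "h \<in> H" for h using Fb that by (auto simp: bij_betw_def)
  have Feq: "F h = x" if "h \<in> H" "x \<in> H'" "g x = f h" for h x
    using gF[OF that(1)] that ginj FH[OF that(1)] by (auto simp: inj_on_def)
  show ?thesis unfolding iso_covered_def
  proof (intro exI[of _ F] conjI)
    show "bij_betw F H H'" by (rule Fb)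
    show "\<forall>h\<in>H. F (s h) = s' (F h) \<and> F (a h) = a' (F h)"
    proof
      fix h assume h: "h \<in> H"
      have "g (s' (F h)) = f (s h)" using gs FH[OF h] gF[OF h] fs h by simp
      then have "F (s h) = s' (F h)" using Feq[of "s h" "s' (F h)"] P1.sH P2.sH FH h by simp
      moreover have "g (a' (F h)) = f (a h)" using ga FH[OF h] gF[OF h] fa h by simp
      then have "F (a h) = a' (F h)" using Feq[of "a h" "a' (F h)"] P1.aH P2.aH FH h by simp
      ultimately show "F (s h) = s' (F h) \<and> F (a h) = a' (F h)" by simp
    qed
    show "F ` S = S'"
    proof
      show "F ` S \<subseteq> S'"
      proof
        fix x assume "x \<in> F ` S"
        then obtain h where h: "h \<in> S" "x = F h" by blast
        then have "h \<in> H" using P1.SH by auto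
        then show "x \<in> S'" using gA fA gF FH h by auto
      qed
      show "S' \<subseteq> F ` S"
      proof
        fix x assume x: "x \<in> S'"
        then have xH: "x \<in> H'" using P2.SH by auto
        then have "g x \<in> set w" using gb by (auto simp: bij_betw_def)
        then have "g x \<in> f ` H" using fb by (simp add: bij_betw_def)
        then obtain h where h: "h \<in> H" "f h = g x" by (metis imageE)
        then have "F h = x" using Feq xH by simp
        moreover have "h \<in> S" using fA gA h x xH by auto
        ultimately show "x \<in> F ` S" by blast
      qed
    qed
    show "H \<noteq> {} \<longrightarrow> F r = r'"
    proof
      assume Hne: "H \<noteq> {}"
      then have "set w \<noteq> {}" using fb by (auto simp: bij_betw_def)
      then have "H' \<noteq> {}" using gb by (auto simp: bij_betw_def)
      then have "r' \<in> H'" "r \<in> H" using cm cm' Hne by (auto simp: covered_map_def is_map_def)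
      moreover have "g r' = f r" using fr gr Hne \<open>H' \<noteq> {}\<close> by simp
      ultimately show "F r = r'" using Feq by simp
    qed
  qed
qed

lemma bar_bar[simp]: "bar (bar x) = x" by (cases x) auto
lemma bar_ne: "bar x \<noteq> x" by (cases x) auto
lemma isA_bar[simp]: "isA (bar x) = isA x" by (cases x) auto

lemma (in alph) ucode_bar: assumes "ucode c cb n u" "x \<in> set u" shows "bar x \<in> set u"
proof -
  have s: "set u = c ` {1..n} \<union> cb ` {1..n}" using assms(1) by (simp add: ucode_def)
  then consider j where "j \<in> {1..n}" "x = c j" | j where "j \<in> {1..n}" "x = cb j" using assms(2) by blast
  then show ?thesis
  proof cases
    case 1 then show ?thesis using s bar_c by auto
  next
    case 2 then show ?thesis using s bar_cb by auto
  qed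
qed

lemma bar_in: assumes cs: "code_shuffle k l w" and x: "x \<in> set w" shows "bar x \<in> set w"
proof (cases "isA x")
  case True
  then have "x \<in> set (filter isA w)" using x by simp
  moreover have "ucode LA LAb k (filter isA w)" using cs by (simp add: code_shuffle_def)
  ultimately have "bar x \<in> set (filter isA w)" using alph.ucode_bar[OF alph_A] by blast
  then show ?thesis by simp
next
  case False
  then have "isB x" using isB_iff by simp
  then have "x \<in> set (filter isB w)" using x by simp
  moreover have "ucode LB LBb l (filter isB w)" using cs by (simp add: code_shuffle_def)
  ultimately have "bar x \<in> set (filter isB w)" using alph.ucode_bar[OF alph_B] by blast
  then show ?thesis by simp
qed

lemma invol_permutes:
  assumes "\<And>x. x \<in> H \<Longrightarrow> g x \<in> H \<and> g (g x) = x" "\<And>x. x \<notin> H \<Longrightarrow> g x = x"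
  shows "g permutes H"
  unfolding permutes_def
proof (intro conjI allI impI)
  fix x assume "x \<notin> H" then show "g x = x" using assms(2) by simp
next
  fix y
  show "\<exists>!x. g x = y"
  proof (cases "y \<in> H")
    case True
    show ?thesis
    proof (rule ex1I[of _ "g y"])
      show "g (g y) = y" using assms(1) True by simp
      fix x assume gx: "g x = y"
      show "x = g y"
      proof (cases "x \<in> H")
        case True then show ?thesis using assms(1) gx by metis
      next
        case False then show ?thesis using assms(2) gx \<open>y \<in> H\<close> by simp
      qed
    qed
  next
    case False
    show ?thesis
    proof (rule ex1I[of _ y])
      show "g y = y" using assms(2) False by simp
      fix x assume gx: "g x = y"
      show "x = y"
      proof (cases "x \<in> H")
        case True then show ?thesis using assms(1) gx False by metis
      next
        case False then show ?thesis using assms(2) gx by simp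
      qed
    qed
  qed
qed

lemma cyclic_transitive:
  assumes cyc: "is_cyclic (face_perm p q) X" and qX: "\<And>z. z \<in> X \<Longrightarrow> q z \<in> X" and pX: "\<And>z. z \<in> X \<Longrightarrow> p z \<in> X"
  shows "transitive_on p q X"
proof -
  let ?R = "gen_rel p q X"
  have step: "(z, face_perm p q z) \<in> ?R\<^sup>*" if "z \<in> X" for z
  proof -
    have "(z, q z) \<in> ?R" using that unfolding gen_rel_def by blast
    moreover have "(q z, p (q z)) \<in> ?R" using qX[OF that] unfolding gen_rel_def by blast
    ultimately show ?thesis unfolding face_perm_def by (meson converse_rtrancl_into_rtrancl r_into_rtrancl)
  qed
  have FX: "face_perm p q z \<in> X" if "z \<in> X" for z using pX qX that unfolding face_perm_def by simp
  have it: "(z, (face_perm p q ^^ j) z) \<in> ?R\<^sup>* \<and> (face_perm p q ^^ j) z \<in> X" if "z \<in> X" for z j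
  proof (induction j)
    case 0 then show ?case using that by simp
  next
    case (Suc j)
    then have a: "(z, (face_perm p q ^^ j) z) \<in> ?R\<^sup>*" and b: "(face_perm p q ^^ j) z \<in> X" by auto
    have "((face_perm p q ^^ j) z, (face_perm p q ^^ Suc j) z) \<in> ?R\<^sup>*" using step[OF b] by simp
    then show ?case using a FX[OF b] by simp
  qed
  show ?thesis unfolding transitive_on_def
  proof (intro ballI)
    fix x y assume "x \<in> X" "y \<in> X"
    then obtain j where "(face_perm p q ^^ j) x = y" using cyc unfolding is_cyclic_def by blast
    then show "(x, y) \<in> ?R\<^sup>*" using it[OF \<open>x \<in> X\<close>, of j] by simp
  qed
qed

lemma funpow_agree:
  assumes "\<And>z. z \<in> X \<Longrightarrow> f z = g z \<and> g z \<in> X" "z \<in> X"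
  shows "(f ^^ j) z = (g ^^ j) z \<and> (g ^^ j) z \<in> X"
  using assms by (induction j) auto

locale sctx =
  fixes k l :: nat and w :: "letter list"
  assumes cs: "code_shuffle k l w"
begin

abbreviation "N \<equiv> length w"
abbreviation "HH \<equiv> {0..<N}"
definition "aa i = (if i < N then pos w (bar (w ! i)) else i)"
definition "th i = (if i < N then Suc i mod N else i)"
definition "SS = {i. i < N \<and> isA (w ! i)}"
definition "ss i = (if i < N then (if isA (w ! i) then th (aa i) else th i) else i)"

lemma dw: "distinct w" using code_shuffle_distinct[OF cs] .

lemma barw: "i < N \<Longrightarrow> bar (w ! i) \<in> set w" using bar_in[OF cs] by simp

lemma aa_lt: "i < N \<Longrightarrow> aa i < N" using pos_props(1)[OF barw] unfolding aa_def by simp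
lemma w_aa: "i < N \<Longrightarrow> w ! aa i = bar (w ! i)" using pos_props(2)[OF barw] unfolding aa_def by simp
lemma aa_aa: "aa (aa i) = i"
proof (cases "i < N")
  case True
  then have "aa (aa i) = pos w (bar (w ! aa i))" using aa_lt unfolding aa_def by simp
  also have "\<dots> = pos w (w ! i)" using w_aa True by simp
  also have "\<dots> = i" using pos_nth[OF dw True] .
  finally show ?thesis .
qed (simp add: aa_def)
lemma aa_ne: "i < N \<Longrightarrow> aa i \<noteq> i" using w_aa bar_ne by metis
lemma aa_perm: "aa permutes HH"
proof (rule invol_permutes)
  show "\<And>x. x \<in> HH \<Longrightarrow> aa x \<in> HH \<and> aa (aa x) = x" using aa_lt aa_aa by simp
  show "\<And>x. x \<notin> HH \<Longrightarrow> aa x = x" by (simp add: aa_def)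
qed

lemma isA_aa: "i < N \<Longrightarrow> isA (w ! aa i) = isA (w ! i)" using w_aa by simp

lemma th_lt: assumes "i < N" shows "th i < N"
proof -
  have "0 < N" using assms by linarith
  then have "Suc i mod N < N" by (rule mod_less_divisor)
  then show ?thesis using assms unfolding th_def by simp
qed

lemma th_perm: "th permutes HH"
proof (rule bij_imp_permutes)
  have inj: "inj_on th HH"
  proof (rule inj_onI)
    fix i j assume i: "i \<in> HH" and j: "j \<in> HH" and e: "th i = th j"
    then have "Suc i mod N = Suc j mod N" unfolding th_def by simp
    then show "i = j" using i j by (auto simp: mod_Suc split: if_splits)
  qed
  moreover have "th ` HH = HH" by (rule endo_inj_surj) (use inj th_lt in auto)
  ultimately show "bij_betw th HH HH" by (simp add: bij_betw_def)
  show "\<And>x. x \<notin> HH \<Longrightarrow> th x = x" unfolding th_def by simp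
qed

definition "gg i = (if i < N \<and> isA (w ! i) then aa i else i)"

lemma gg_perm: "gg permutes HH"
proof (rule invol_permutes)
  show "\<And>x. x \<in> HH \<Longrightarrow> gg x \<in> HH \<and> gg (gg x) = x" using aa_lt aa_aa isA_aa by (simp add: gg_def)
  show "\<And>x. x \<notin> HH \<Longrightarrow> gg x = x" by (simp add: gg_def)
qed

lemma ss_eq: "ss = th \<circ> gg" unfolding ss_def gg_def th_def by (rule ext) auto

lemma ss_perm: "ss permutes HH" unfolding ss_eq by (rule permutes_compose[OF gg_perm th_perm])

lemma SS_sub: "SS \<subseteq> HH" unfolding SS_def by auto

lemma pm: "premap HH ss aa SS"
proof unfold_locales
  show "finite HH" by simp
  show "ss permutes HH" by (rule ss_perm)
  show "aa permutes HH" by (rule aa_perm)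
  show "SS \<subseteq> HH" by (rule SS_sub)
  show "\<And>h. h \<in> HH \<Longrightarrow> aa h \<noteq> h \<and> aa (aa h) = h" using aa_ne aa_aa by simp
  show "\<And>h. h \<in> SS \<Longrightarrow> aa h \<in> SS" using aa_lt isA_aa by (simp add: SS_def)
qed

lemma motion_eq: "motion ss aa SS = th"
proof (rule ext)
  fix i
  show "motion ss aa SS i = th i"
  proof (cases "i \<in> SS")
    case True
    then have i: "i < N" "isA (w ! i)" by (auto simp: SS_def)
    then have "aa i < N" "isA (w ! aa i)" using aa_lt isA_aa by auto
    then have "ss (aa i) = th (aa (aa i))" unfolding ss_def by simp
    then show ?thesis using True aa_aa by (simp add: motion_def)
  next
    case False
    then have "ss i = th i" unfolding ss_def SS_def th_def by auto
    then show ?thesis using False by (simp add: motion_def)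
  qed
qed

lemma th_iter: "i < N \<Longrightarrow> (th ^^ j) i = (i + j) mod N"
proof (induction j)
  case 0 then show ?case by simp
next
  case (Suc j)
  have "(i + j) mod N < N" using Suc.prems by (metis mod_less_divisor gr_implies_not0 neq0_conv)
  have "(th ^^ Suc j) i = th ((i + j) mod N)" using Suc by simp
  also have "\<dots> = Suc ((i + j) mod N) mod N" using \<open>(i + j) mod N < N\<close> by (simp add: th_def)
  finally have "(th ^^ Suc j) i = Suc ((i + j) mod N) mod N" .
  also have "\<dots> = (i + Suc j) mod N" by (simp add: mod_Suc_eq)
  finally show ?case .
qed

lemma th_reach: "x < N \<Longrightarrow> y < N \<Longrightarrow> (th ^^ (y + N - x)) x = y"
  using th_iter by simp

lemma th_cyc: "is_cyclic th HH"
  unfolding is_cyclic_def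
proof (intro ballI)
  fix x y assume "x \<in> HH" "y \<in> HH"
  then have "(th ^^ (y + N - x)) x = y" using th_reach by simp
  then show "\<exists>k. (th ^^ k) x = y" by blast
qed

lemma ismap: "is_map HH ss aa 0"
  unfolding is_map_def
proof (intro conjI)
  show "finite HH" by simp
  show "ss permutes HH" by (rule ss_perm)
  show "aa permutes HH" by (rule aa_perm)
  show "\<forall>h\<in>HH. aa h \<noteq> h \<and> aa (aa h) = h" using aa_ne aa_aa by simp
  show "HH \<noteq> {} \<longrightarrow> 0 \<in> HH" by auto
  let ?R = "gen_rel ss aa HH"
  have st: "(x, th x) \<in> ?R\<^sup>*" if x: "x < N" for x
  proof (cases "isA (w ! x)")
    case True
    have "(x, aa x) \<in> ?R" using x unfolding gen_rel_def by auto
    moreover have "(aa x, ss (aa x)) \<in> ?R" using aa_lt[OF x] unfolding gen_rel_def by auto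
    moreover have "ss (aa x) = th x" using aa_lt[OF x] isA_aa[OF x] True aa_aa unfolding ss_def by simp
    ultimately show ?thesis by (metis converse_rtrancl_into_rtrancl r_into_rtrancl)
  next
    case False
    have "(x, ss x) \<in> ?R" using x unfolding gen_rel_def by auto
    moreover have "ss x = th x" using x False unfolding ss_def by simp
    ultimately show ?thesis by simp
  qed
  have it: "(x, (th ^^ j) x) \<in> ?R\<^sup>* \<and> (th ^^ j) x < N" if x: "x < N" for x j
  proof (induction j)
    case 0 then show ?case using x by simp
  next
    case (Suc j)
    then show ?case using st[of "(th ^^ j) x"] th_lt[of "(th ^^ j) x"] by (auto intro: rtrancl_trans)
  qed
  show "transitive_on ss aa HH" unfolding transitive_on_def
  proof (intro ballI)
    fix x y assume "x \<in> HH" "y \<in> HH"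
    then have "x < N" "y < N" by auto
    then show "(x, y) \<in> ?R\<^sup>*" using it[of x "y + N - x"] th_reach by simp
  qed
qed


lemma covmap: "covered_map HH ss aa 0 SS"
proof -
  interpret premap HH ss aa SS by (rule pm)
  have th: "\<theta> = th" by (rule motion_eq)
  have rin: "restr ss SS z \<in> SS" if "z \<in> SS" for z
  proof (rule restr_in[OF that])
    obtain k where "k > 0" "(ss ^^ k) z = z" using perm_period_pt[OF ss_perm, of z] by auto
    then show "\<exists>k>0. (ss ^^ k) z \<in> SS" using that by auto
  qed
  have fc: "is_cyclic (face_perm (restr ss SS) (restr aa SS)) SS"
  proof (cases "SS = {}")
    case True then show ?thesis by (simp add: is_cyclic_def)
  next
    case False
    then have Npos: "N > 0" using SS_sub by auto
    have cl: "cyc_list th [0..<N]"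
      unfolding cyc_list_def using Npos by (auto simp: th_def)
    have ne: "filter (\<lambda>x. x \<in> SS) [0..<N] \<noteq> []" using False SS_sub by (auto simp: filter_empty_conv)
    have "cyc_list (restr th SS) (filter (\<lambda>x. x \<in> SS) [0..<N])" using cyc_list_filter[OF cl ne] .
    then have cy: "is_cyclic (restr th SS) (set (filter (\<lambda>x. x \<in> SS) [0..<N]))" by (rule cyc_list.cyclic)
    have setf: "set (filter (\<lambda>x. x \<in> SS) [0..<N]) = SS" using SS_sub by auto
    have agree: "face_perm (restr ss SS) (restr aa SS) z = restr th SS z \<and> restr th SS z \<in> SS" if "z \<in> SS" for z
      using faceA[OF that] th rin[of "aa z"] restr_aS[OF that] C1[OF that] that aS by (simp add: face_perm_def)
    show ?thesis unfolding is_cyclic_def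
    proof (intro ballI)
      fix x y assume x: "x \<in> SS" and y: "y \<in> SS"
      then obtain j where "(restr th SS ^^ j) x = y" using cy setf unfolding is_cyclic_def by blast
      moreover have "(face_perm (restr ss SS) (restr aa SS) ^^ j) x = (restr th SS ^^ j) x"
        using funpow_agree[of SS "face_perm (restr ss SS) (restr aa SS)" "restr th SS" x j] agree x by blast
      ultimately show "\<exists>k. (face_perm (restr ss SS) (restr aa SS) ^^ k) x = y" by metis
    qed
  qed
  have tr: "transitive_on (restr ss SS) (restr aa SS) SS"
    by (rule cyclic_transitive[OF fc]) (use restr_aS aS rin in auto)
  have cov: "(\<forall>h\<in>HH. \<exists>k. (ss ^^ k) h \<in> SS) \<or> (SS = {} \<and> is_cyclic ss HH)"
  proof (cases "SS = {}")
    case True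
    have "motion ss aa {} = ss" by (rule ext) (simp add: motion_def)
    then have "ss = th" using th True by simp
    then show ?thesis using True th_cyc by simp
  next
    case False
    then obtain x0 where x0: "x0 \<in> SS" by blast
    have "\<exists>k. (ss ^^ k) h \<in> SS" if h: "h \<in> HH" for h
    proof -
      have "x0 \<in> HH" using x0 SS_sub by blast
      then obtain i where "(th ^^ i) h = x0" using th_cyc h unfolding is_cyclic_def by blast
      then have exth: "\<exists>i. (th ^^ i) h \<in> SS" using x0 by blast
      have "first_in ss SS h = first_in th SS h"
      proof (rule first_agree[where H=HH])
        show "\<And>z. z \<in> HH \<Longrightarrow> z \<notin> SS \<Longrightarrow> ss z = th z" by (simp add: ss_def SS_def)
        show "\<And>z. z \<in> HH \<Longrightarrow> th z \<in> HH" using th_lt by simp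
      qed (use h exth in auto)
      moreover have "first_in th SS h \<in> SS" unfolding first_in_def by (rule LeastI_ex[OF exth])
      ultimately show ?thesis unfolding first_in_def by metis
    qed
    then show ?thesis by blast
  qed
  show ?thesis unfolding covered_map_def
    using ismap SS_sub aS tr cov fc by auto
qed

lemma lenA: "length (filter isA w) = 2 * k"
  using alph.ucode_length[OF alph_A] cs by (simp add: code_shuffle_def)
lemma lenB: "length (filter isB w) = 2 * l"
  using alph.ucode_length[OF alph_B] cs by (simp add: code_shuffle_def)

lemma cardH: "card HH = 2 * (k + l)"
proof -
  have "filter isB w = filter (\<lambda>x. \<not> isA x) w" by (rule filter_cong) (simp_all add: isB_iff)
  then have "N = length (filter isA w) + length (filter isB w)" using sum_length_filter_compl[of isA w] by simp
  then show ?thesis using lenA lenB by simp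
qed

lemma cardS: "card SS = 2 * k"
  using lenA length_filter_conv_card[of isA w] unfolding SS_def by simp

lemma cardB: "card (HH - SS) = 2 * l"
  using card_Diff_subset[OF finite_subset[OF SS_sub] SS_sub] cardH cardS by simp

lemma code: "covered_code HH ss aa 0 SS w"
  unfolding covered_code_def
proof (intro conjI exI[of _ "nth w"])
  show "code_shuffle (card SS div 2) (card (HH - SS) div 2) w" using cs cardS cardB by simp
  show "bij_betw (nth w) HH (set w)"
    unfolding bij_betw_def using inj_on_nth[OF dw, of HH] by (auto simp: set_conv_nth)
  show "\<forall>h\<in>HH. isA (w ! h) = (h \<in> SS)" by (simp add: SS_def)
  show "\<forall>h\<in>HH. w ! aa h = bar (w ! h)" using w_aa by simp
  show "HH \<noteq> {} \<longrightarrow> w ! 0 = w ! 0" by simp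
  show "\<forall>h\<in>HH. \<forall>i<length w. w ! h = w ! i \<longrightarrow> w ! motion ss aa SS h = w ! (Suc i mod length w)"
  proof (intro ballI allI impI)
    fix h i assume h: "h \<in> HH" and i: "i < length w" and e: "w ! h = w ! i"
    then have "h = i" using dw nth_eq_iff_index_eq by auto
    then show "w ! motion ss aa SS h = w ! (Suc i mod length w)" using motion_eq h by (simp add: th_def)
  qed
qed

end

lemma part3:
  assumes "code_shuffle k l w"
  shows "\<exists>(H::nat set) s a r S. covered_map H s a r S \<and> card H = 2 * (k + l)
          \<and> card S = 2 * k \<and> covered_code H s a r S w"
proof -
  interpret sctx k l w using assms by unfold_locales
  show ?thesis using covmap cardH cardS code by blast
qed

lemma covctx_I: "covered_map H s a r S \<Longrightarrow> H \<noteq> {} \<Longrightarrow> covctx H s a S r"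
  unfolding covctx_def covctx_axioms_def by (simp add: covered_premap)

lemma code_len: "covered_code H s a r S w \<Longrightarrow> length w = card H"
proof -
  assume cc: "covered_code H s a r S w"
  then have sh: "code_shuffle (card S div 2) (card (H - S) div 2) w" by (simp add: covered_code_def)
  obtain f where "bij_betw f H (set w)" using cc unfolding covered_code_def by blast
  then show ?thesis using bij_betw_same_card distinct_card[OF code_shuffle_distinct[OF sh]] by metis
qed

lemma empty_S: "covered_map H s a r S \<Longrightarrow> H = {} \<Longrightarrow> S = {}"
  by (auto simp: covered_map_def)

lemma code_emptyH: assumes "H = {}" "S = {}" shows "covered_code H s a r S w \<longleftrightarrow> w = []"
proof
  assume "covered_code H s a r S w"
  then have "length w = 0" using code_len assms by fastforce
  then show "w = []" by simp
next
  assume "w = []"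
  then show "covered_code H s a r S w" using assms
    by (simp add: covered_code_def code_shuffle_def ucode0 bij_betw_def)
qed

lemma P1: "\<forall>(H::'a set) s a r S. covered_map H s a r S \<longrightarrow>
       (\<exists>!w. covered_code H s a r S w)
       \<and> (\<forall>w. covered_code H s a r S w \<longrightarrow>
              code_shuffle (card S div 2) (card (H - S) div 2) w \<and> length w = card H)"
proof (intro allI impI)
  fix H :: "'a set" and s a r S
  assume cm: "covered_map H s a r S"
  have u: "\<exists>!w. covered_code H s a r S w"
  proof (cases "H = {}")
    case True
    then show ?thesis using code_emptyH[OF True empty_S[OF cm True]] by simp
  next
    case False
    interpret covctx H s a S r using covctx_I[OF cm False] .
    show ?thesis using w_code code_unique by blast
  qed
  have "\<forall>w. covered_code H s a r S w \<longrightarrow> code_shuffle (card S div 2) (card (H - S) div 2) w \<and> length w = card H"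
  proof (intro allI impI conjI)
    fix w assume cc: "covered_code H s a r S w"
    show "code_shuffle (card S div 2) (card (H - S) div 2) w" using cc unfolding covered_code_def by (rule conjunct1)
    show "length w = card H" using cc by (rule code_len)
  qed
  then show "(\<exists>!w. covered_code H s a r S w) \<and> (\<forall>w. covered_code H s a r S w \<longrightarrow>
              code_shuffle (card S div 2) (card (H - S) div 2) w \<and> length w = card H)" using u by blast
qed

lemma P2: "\<forall>(H::'a set) s a r S (H'::'b set) s' a' r' S' w.
       covered_map H s a r S \<and> covered_map H' s' a' r' S'
       \<and> covered_code H s a r S w \<and> covered_code H' s' a' r' S' w
       \<longrightarrow> iso_covered H s a r S H' s' a' r' S'"
proof (intro allI impI)
  fix H :: "'a set" and s a r S and H' :: "'b set" and s' a' r' S' w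
  assume "covered_map H s a r S \<and> covered_map H' s' a' r' S' \<and> covered_code H s a r S w \<and> covered_code H' s' a' r' S' w"
  then show "iso_covered H s a r S H' s' a' r' S'" by (elim conjE) (rule part2)
qed

lemma P3: "\<forall>k l w. code_shuffle k l w \<longrightarrow>
       (\<exists>(H::nat set) s a r S. covered_map H s a r S \<and> card H = 2 * (k + l)
          \<and> card S = 2 * k \<and> covered_code H s a r S w)"
  by (intro allI impI) (rule part3)

lemma P4: "\<forall>(H::'a set) s a r S w. covered_map H s a r S \<and> covered_code H s a r S w \<longrightarrow>
       umap_code LA LAb S (restr s S) (restr a S) (first_in s S r) (filter isA w)
       \<and> umap_code LB LBb (H - S) (restr (face_perm s a) (H - S)) (restr a (H - S))
            (first_in (face_perm s a) (H - S) r) (filter isB w)"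
proof (intro allI impI)
  fix H :: "'a set" and s a r S w
  assume "covered_map H s a r S \<and> covered_code H s a r S w"
  then have cm: "covered_map H s a r S" and cc: "covered_code H s a r S w" by blast+
  show "umap_code LA LAb S (restr s S) (restr a S) (first_in s S r) (filter isA w)
       \<and> umap_code LB LBb (H - S) (restr (face_perm s a) (H - S)) (restr a (H - S))
            (first_in (face_perm s a) (H - S) r) (filter isB w)"
  proof (cases "H = {}")
    case True
    then have "S = {}" using empty_S[OF cm] by simp
    then have "w = []" using cc code_emptyH[OF True \<open>S = {}\<close>, of s a r w] by simp
    then show ?thesis using True \<open>S = {}\<close> by (simp add: umap_code_def ucode0 bij_betw_def)
  next
    case False
    interpret covctx H s a S r using covctx_I[OF cm False] .
    show ?thesis by (rule conjI[OF restrA[OF cc] restrB[OF cc]])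
  qed
qed

theorem mainTheorem8:
  shows
   \<comment> \<open>every covered map has a unique code, which is a code-shuffle of length 2n\<close>
   "(\<forall>(H::'a set) s a r S. covered_map H s a r S \<longrightarrow>
       (\<exists>!w. covered_code H s a r S w)
       \<and> (\<forall>w. covered_code H s a r S w \<longrightarrow>
              code_shuffle (card S div 2) (card (H - S) div 2) w \<and> length w = card H))
   \<and> \<comment> \<open>injectivity up to root-preserving relabelling\<close>
   (\<forall>(H::'a set) s a r S (H'::'b set) s' a' r' S' w.
       covered_map H s a r S \<and> covered_map H' s' a' r' S'
       \<and> covered_code H s a r S w \<and> covered_code H' s' a' r' S' w
       \<longrightarrow> iso_covered H s a r S H' s' a' r' S')
   \<and> \<comment> \<open>surjectivity onto code-shuffles\<close>
   (\<forall>k l w. code_shuffle k l w \<longrightarrow>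
       (\<exists>(H::nat set) s a r S. covered_map H s a r S \<and> card H = 2 * (k + l)
          \<and> card S = 2 * k \<and> covered_code H s a r S w))
   \<and> \<comment> \<open>the restrictions of the code are the codes of the restricted maps\<close>
   (\<forall>(H::'a set) s a r S w. covered_map H s a r S \<and> covered_code H s a r S w \<longrightarrow>
       umap_code LA LAb S (restr s S) (restr a S) (first_in s S r) (filter isA w)
       \<and> umap_code LB LBb (H - S) (restr (face_perm s a) (H - S)) (restr a (H - S))
            (first_in (face_perm s a) (H - S) r) (filter isB w))"
  by (rule conjI[OF P1 conjI[OF P2 conjI[OF P3 P4]]])

end
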